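(* Let $(Q,\cdot,\times,\mathrm{tr}_\cdot,\mathrm{tr}_\times,\pi,\mu)$ be a character algebra with $1_\cdot\times1_\cdot=n1_\cdot$, and let $d=\dim Q$. (1) Both $(Q,\cdot)$ and $(Q,\times)$ are isomorphic as algebras to $\mathbb{C}^d$. Let $\{\mathrm{X}_i\}_{i=1}^d$ be the minimal idempotents of $(Q,\cdot)$ and $\{\Psi_j\}_{j=1}^d$ those of $(Q,\times)$. (2) $\pi\mathrm{X}_i=\mathrm{X}_i$ and $\mu\Psi_j=\Psi_j$ for all $i,j$; $\mu$ permutes the $\mathrm{X}_i$ and $\pi$ permutes the $\Psi_j$, defining involutions (also denoted $\mu,\pi$) of the index sets by $\mu\mathrm{X}_i=\mathrm{X}_{\mu(i)}$, $\pi\Psi_j=\Psi_{\pi(j)}$. (3) Setting $A_i:=(\mathrm{X}_i,\mathrm{X}_i)$, $B_j:=(\Psi_j,\Psi_j)$, $C_{ij}:=(\mathrm{X}_i,\Psi_j)$, one has $(\mathrm{X}_i,\mathrm{X}_{i'})=A_i\delta_{ii'}$, $(\Psi_j,\Psi_{j'})=B_j\delta_{jj'}$, $A_i=\mathrm{tr}_\cdot(\mathrm{X}_i)>0$, $B_j=\mathrm{tr}_\times(\Psi_j)>0$, and $$B_k\delta_{kl}=\sum_{i=1}^d A_i^{-1}\,\overline{C_{ik}}\,C_{il},\qquad A_i\delta_{ij}=\sum_{s=1}^d B_s^{-1}C_{is}\overline{C_{js}} .$$ Moreover $A_{\mu(i)}=A_i$, $B_{\pi(j)}=B_j$, $C_{i\pi(j)}=\overline{C_{ij}}$,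 $C_{\mu(i)j}=\overline{C_{ij}}$. (4) Conversely, the data $(A,B,C)$ together with the involutions $\mu,\pi$ on the index sets determine the character algebra up to isomorphism. (5) $1_\cdot/n$ is an idempotent for $\times$ and $1_\times$ is an idempotent for $\cdot$; writing $1_\cdot/n=\sum_j n_j\Psi_j$ and $1_\times=\sum_i m_i\mathrm{X}_i$ with $n_j,m_i\in\{0,1\}$, one has $$A_i=n\sum_j C_{ij}n_j,\qquad B_j=\sum_i C_{ij}m_i .$$ In particular, if $1_\cdot/n=\Psi_1$ and $1_\times=\mathrm{X}_1$, then $A_i=nC_{i1}$ and $B_j=C_{1j}$.
   Context: A character algebra is a finite-dimensional complex vector space $Q$ with two commutative associative unital bilinear products $\cdot$ (unit $1_\cdot$) and $\times$ (unit $1_\times$), two linear functionals $\mathrm{tr}_\cdot,\mathrm{tr}_\times:Q\to\mathbb{C}$, and two commuting complex-antilinear involutions $\pi,\mu$ of $Q$, each of which is a ring automorphism for both products, such that: (i) $\mathrm{tr}_\cdot(\pi a)=\mathrm{tr}_\cdot(\mu a)=\overline{\mathrm{tr}_\cdot(a)}$ and $\mathrm{tr}_\times(\pi a)=\mathrm{tr}_\times(\mu a)=\overline{\mathrm{tr}_\times(a)}$ for all $a$; (ii) $\mathrm{tr}_\cdot(a\cdot\pi b)=\mathrm{tr}_\times(a\times\mu b)$ for all $a,b$, and this common value is denoted $(a,b)$; (iii) $(a,a)>0$ for all $a\neq 0$; (iv) $1_\times\cdot 1_\times=1_\times$ and $1_\cdot\times 1_\cdot=n\,1_\cdot$ for some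 real $n>0$. An isomorphism of character algebras is a linear bijection intertwining both products, both functionals and both involutions. *)

theory Defs
  imports Complex_Main
begin

text \<open>A character algebra is packaged as a record over a type 'q whose additive
group structure is the ambient one; complex scalar multiplication is the field scl.\<close>

record 'q chalg =
  scl :: "complex \<Rightarrow> 'q \<Rightarrow> 'q"
  dotp :: "'q \<Rightarrow> 'q \<Rightarrow> 'q"
  one_dot :: 'q
  crossp :: "'q \<Rightarrow> 'q \<Rightarrow> 'q"
  one_cross :: 'q
  tr_dot :: "'q \<Rightarrow> complex"
  tr_cross :: "'q \<Rightarrow> complex"
  piQ :: "'q \<Rightarrow> 'q"
  muQ :: "'q \<Rightarrow> 'q"

definition ip :: "('q, 'z) chalg_scheme \<Rightarrow> 'q \<Rightarrow> 'q \<Rightarrow> complex" where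
  "ip Q a b = tr_dot Q (dotp Q a (piQ Q b))"

definition bilin_comm_unital ::
  "(complex \<Rightarrow> 'q::ab_group_add \<Rightarrow> 'q) \<Rightarrow> ('q \<Rightarrow> 'q \<Rightarrow> 'q) \<Rightarrow> 'q \<Rightarrow> bool" where
  "bilin_comm_unital s p u \<longleftrightarrow>
     (\<forall>a b. p a b = p b a) \<and> (\<forall>a b c. p (p a b) c = p a (p b c)) \<and> (\<forall>a. p u a = a) \<and>
     (\<forall>c a b e. p (s c a + b) e = s c (p a e) + p b e) \<and>
     (\<forall>c a b e. p e (s c a + b) = s c (p e a) + p e b)"

definition antilin_inv_aut ::
  "(complex \<Rightarrow> 'q::ab_group_add \<Rightarrow> 'q) \<Rightarrow> ('q \<Rightarrow> 'q \<Rightarrow> 'q) \<Rightarrow> ('q \<Rightarrow> 'q \<Rightarrow> 'q) \<Rightarrow> ('q \<Rightarrow> 'q) \<Rightarrow> bool" where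
  "antilin_inv_aut s p1 p2 f \<longleftrightarrow>
     (\<forall>c a b. f (s c a + b) = s (cnj c) (f a) + f b) \<and> (\<forall>a. f (f a) = a) \<and>
     (\<forall>a b. f (p1 a b) = p1 (f a) (f b)) \<and> (\<forall>a b. f (p2 a b) = p2 (f a) (f b))"

definition char_alg :: "('q::ab_group_add) chalg \<Rightarrow> real \<Rightarrow> bool" where
  "char_alg Q n \<longleftrightarrow>
     vector_space (scl Q) \<and> (\<exists>B. finite_dimensional_vector_space (scl Q) B) \<and>
     bilin_comm_unital (scl Q) (dotp Q) (one_dot Q) \<and>
     bilin_comm_unital (scl Q) (crossp Q) (one_cross Q) \<and>
     (\<forall>c a b. tr_dot Q (scl Q c a + b) = c * tr_dot Q a + tr_dot Q b) \<and>
     (\<forall>c a b. tr_cross Q (scl Q c a + b) = c * tr_cross Q a + tr_cross Q b) \<and>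
     antilin_inv_aut (scl Q) (dotp Q) (crossp Q) (piQ Q) \<and>
     antilin_inv_aut (scl Q) (dotp Q) (crossp Q) (muQ Q) \<and>
     (\<forall>a. piQ Q (muQ Q a) = muQ Q (piQ Q a)) \<and>
     (\<forall>a. tr_dot Q (piQ Q a) = cnj (tr_dot Q a) \<and> tr_dot Q (muQ Q a) = cnj (tr_dot Q a)) \<and>
     (\<forall>a. tr_cross Q (piQ Q a) = cnj (tr_cross Q a) \<and> tr_cross Q (muQ Q a) = cnj (tr_cross Q a)) \<and>
     (\<forall>a b. tr_dot Q (dotp Q a (piQ Q b)) = tr_cross Q (crossp Q a (muQ Q b))) \<and>
     (\<forall>a. a \<noteq> 0 \<longrightarrow> Im (ip Q a a) = 0 \<and> Re (ip Q a a) > 0) \<and>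
     dotp Q (one_cross Q) (one_cross Q) = one_cross Q \<and>
     n > 0 \<and> crossp Q (one_dot Q) (one_dot Q) = scl Q (complex_of_real n) (one_dot Q)"

definition cdim :: "('q::ab_group_add) chalg \<Rightarrow> nat" where
  "cdim Q = vector_space.dim (scl Q) (UNIV :: 'q set)"

definition min_idem :: "('q::ab_group_add \<Rightarrow> 'q \<Rightarrow> 'q) \<Rightarrow> 'q \<Rightarrow> bool" where
  "min_idem p e \<longleftrightarrow> e \<noteq> 0 \<and> p e e = e \<and> (\<forall>f. p f f = f \<and> p f e = f \<longrightarrow> f = 0 \<or> f = e)"

text \<open>C^d is modelled as the functions nat => complex vanishing outside {..<d}, with
pointwise operations; phi is a unital algebra isomorphism from (Q, p, u) onto it.\<close>
definition cd_alg_iso ::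
  "('q::ab_group_add) chalg \<Rightarrow> ('q \<Rightarrow> 'q \<Rightarrow> 'q) \<Rightarrow> 'q \<Rightarrow> nat \<Rightarrow> ('q \<Rightarrow> nat \<Rightarrow> complex) \<Rightarrow> bool" where
  "cd_alg_iso Q p u d \<phi> \<longleftrightarrow>
     (\<forall>c a b i. \<phi> (scl Q c a + b) i = c * \<phi> a i + \<phi> b i) \<and>
     bij_betw \<phi> UNIV {f. \<forall>i\<ge>d. f i = 0} \<and>
     (\<forall>a b i. \<phi> (p a b) i = \<phi> a i * \<phi> b i) \<and> (\<forall>i<d. \<phi> u i = 1)"

definition chalg_iso :: "('q::ab_group_add) chalg \<Rightarrow> ('r::ab_group_add) chalg \<Rightarrow> ('q \<Rightarrow> 'r) \<Rightarrow> bool" where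
  "chalg_iso Q Q' \<phi> \<longleftrightarrow>
     (\<forall>c a b. \<phi> (scl Q c a + b) = scl Q' c (\<phi> a) + \<phi> b) \<and> bij \<phi> \<and>
     (\<forall>a b. \<phi> (dotp Q a b) = dotp Q' (\<phi> a) (\<phi> b)) \<and>
     (\<forall>a b. \<phi> (crossp Q a b) = crossp Q' (\<phi> a) (\<phi> b)) \<and>
     (\<forall>a. tr_dot Q' (\<phi> a) = tr_dot Q a) \<and> (\<forall>a. tr_cross Q' (\<phi> a) = tr_cross Q a) \<and>
     (\<forall>a. \<phi> (piQ Q a) = piQ Q' (\<phi> a)) \<and> (\<forall>a. \<phi> (muQ Q a) = muQ Q' (\<phi> a))"

end

theory Submission
  imports Defs "HOL-Computational_Algebra.Fundamental_Theorem_Algebra"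
begin


locale palg =
  fixes s :: "complex \<Rightarrow> 'q::ab_group_add \<Rightarrow> 'q" and p :: "'q \<Rightarrow> 'q \<Rightarrow> 'q" and u :: 'q
    and t :: "'q \<Rightarrow> complex" and f :: "'q \<Rightarrow> 'q"
  assumes vs: "vector_space s"
  and fdim: "\<exists>B. finite_dimensional_vector_space s B"
  and bl: "bilin_comm_unital s p u"
  and tlin: "\<forall>c a b. t (s c a + b) = c * t a + t b"
  and faut: "antilin_inv_aut s p p f"
  and tf: "\<forall>a. t (f a) = cnj (t a)"
  and pos: "\<forall>a. a \<noteq> 0 \<longrightarrow> Im (t (p a (f a))) = 0 \<and> Re (t (p a (f a))) > 0"
begin

sublocale vector_space s by (rule vs)

lemma p_comm: "p a b = p b a" using bl by (auto simp: bilin_comm_unital_def)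
lemma p_assoc: "p (p a b) c = p a (p b c)" using bl by (auto simp: bilin_comm_unital_def)
lemma p_unit[simp]: "p u a = a" using bl by (auto simp: bilin_comm_unital_def)
lemma p_unit_r[simp]: "p a u = a" using p_comm p_unit by metis
lemma p_lin: "p (s c a + b) e = s c (p a e) + p b e" using bl by (auto simp: bilin_comm_unital_def)

lemma p_zero_l[simp]: "p 0 e = 0"
proof -
  have "p (s 1 0 + 0) e = s 1 (p 0 e) + p 0 e" by (rule p_lin)
  then show ?thesis by simp
qed
lemma p_zero_r[simp]: "p e 0 = 0" using p_comm p_zero_l by metis
lemma p_add_l: "p (a + b) e = p a e + p b e" using p_lin[of 1 a b e] by simp
lemma p_add_r: "p e (a + b) = p e a + p e b" using p_add_l p_comm by metis
lemma p_scale_l: "p (s c a) e = s c (p a e)" using p_lin[of c a 0 e] by simp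
lemma p_scale_r: "p e (s c a) = s c (p e a)" using p_scale_l p_comm by metis
lemma p_minus_l: "p (- a) e = - p a e" using p_add_l[of a "-a" e] by (simp add: add_eq_0_iff)
lemma p_minus_r: "p e (- a) = - p e a" using p_minus_l p_comm by metis
lemma p_diff_l: "p (a - b) e = p a e - p b e" using p_add_l[of a "-b" e] p_minus_l by simp
lemma p_diff_r: "p e (a - b) = p e a - p e b" using p_diff_l p_comm by metis
lemma p_sum_l: "p (\<Sum>i\<in>A. g i) e = (\<Sum>i\<in>A. p (g i) e)"
  by (induction A rule: infinite_finite_induct) (auto simp: p_add_l)
lemma p_sum_r: "p e (\<Sum>i\<in>A. g i) = (\<Sum>i\<in>A. p e (g i))"
  by (induction A rule: infinite_finite_induct) (auto simp: p_add_r)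
lemma p_lcomm: "p a (p b c) = p b (p a c)" by (metis p_assoc p_comm)

lemma t_lin: "t (s c a + b) = c * t a + t b" using tlin by auto
lemma t_zero[simp]: "t 0 = 0" using t_lin[of 1 0 0] by simp
lemma t_add: "t (a + b) = t a + t b" using t_lin[of 1 a b] by simp
lemma t_scale: "t (s c a) = c * t a" using t_lin[of c a 0] by simp
lemma t_sum: "t (\<Sum>i\<in>A. g i) = (\<Sum>i\<in>A. t (g i))"
  by (induction A rule: infinite_finite_induct) (auto simp: t_add)
lemma t_f: "t (f a) = cnj (t a)" using tf by auto

end

locale aaut = palg +
  fixes g
  assumes gaut: "antilin_inv_aut s p p g"
begin
lemma g_lin: "g (s c a + b) = s (cnj c) (g a) + g b" using gaut by (auto simp: antilin_inv_aut_def)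
lemma g_g[simp]: "g (g a) = a" using gaut by (auto simp: antilin_inv_aut_def)
lemma g_p: "g (p a b) = p (g a) (g b)" using gaut by (auto simp: antilin_inv_aut_def)
lemma g_zero[simp]: "g 0 = 0" using g_lin[of 1 0 0] by simp
lemma g_add: "g (a + b) = g a + g b" using g_lin[of 1 a b] by simp
lemma g_scale: "g (s c a) = s (cnj c) (g a)" using g_lin[of c a 0] by simp
lemma g_inj: "g a = g b \<Longrightarrow> a = b" by (metis g_g)
lemma g_eq0: "g a = 0 \<longleftrightarrow> a = 0" by (metis g_g g_zero)
lemma g_u[simp]: "g u = u"
proof -
  have "p (g u) a = a" for a by (metis g_g g_p p_unit)
  then show ?thesis by (metis p_unit_r)
qed
end

context palg begin
lemma f_aaut: "aaut s p u t f f" by (unfold_locales) (rule faut)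
end


context palg begin
lemmas f_lin = aaut.g_lin[OF f_aaut] and f_f = aaut.g_g[OF f_aaut] and f_p = aaut.g_p[OF f_aaut]
  and f_zero = aaut.g_zero[OF f_aaut] and f_add = aaut.g_add[OF f_aaut] and f_scale = aaut.g_scale[OF f_aaut]
  and f_eq0 = aaut.g_eq0[OF f_aaut] and f_u = aaut.g_u[OF f_aaut]

lemma reduced: assumes "p a a = 0" shows "a = 0"
proof -
  define b where "b = p a (f a)"
  have "f b = p (f a) a" by (simp add: b_def f_p f_f)
  then have "p b (f b) = p (p a a) (p (f a) (f a))" by (simp add: b_def p_assoc) (metis p_comm p_lcomm)
  then have "p b (f b) = 0" using assms by simp
  then have "b = 0" using pos by (metis less_irrefl t_zero zero_complex.simps(1))
  then show "a = 0" using pos by (metis b_def less_irrefl t_zero zero_complex.simps(1))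
qed

definition pw :: "'q \<Rightarrow> nat \<Rightarrow> 'q" where "pw a k = (p a ^^ k) u"
lemma pw_0[simp]: "pw a 0 = u" by (simp add: pw_def)
lemma pw_Suc[simp]: "pw a (Suc k) = p a (pw a k)" by (simp add: pw_def)
lemma pw_add: "pw a (m + k) = p (pw a m) (pw a k)"
  by (induction m) (auto simp: p_assoc)

lemma pw_zero_imp: "pw a k = 0 \<Longrightarrow> a = 0"
proof (induction k rule: less_induct)
  case (less k)
  show ?case
  proof (cases "k \<le> 1")
    case True
    then consider "k = 0" | "k = 1" by linarith
    then show ?thesis
    proof cases
      case 1 then have "u = 0" using less by simp
      then show ?thesis by (metis p_unit p_zero_l)
    next
      case 2 then show ?thesis using less by simp
    qed
  next
    case False
    define j where "j = (k + 1) div 2"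
    have jk: "j < k" "k \<le> j + j" using False by (auto simp: j_def)
    have "pw a (j + j) = p (pw a k) (pw a (j + j - k))" using jk pw_add[of a k "j+j-k"] by simp
    then have "p (pw a j) (pw a j) = 0" using less.prems by (simp add: pw_add[symmetric])
    then have "pw a j = 0" by (rule reduced)
    then show ?thesis using less.IH jk by blast
  qed
qed

definition ev :: "'q \<Rightarrow> complex poly \<Rightarrow> 'q" where
  "ev a q = (\<Sum>i\<le>degree q. s (coeff q i) (pw a i))"

lemma ev_bound: assumes "degree q \<le> N" shows "ev a q = (\<Sum>i\<le>N. s (coeff q i) (pw a i))"
  unfolding ev_def using assms
  by (intro sum.mono_neutral_left) (auto simp: coeff_eq_0)

lemma ev_add: "ev a (q1 + q2) = ev a q1 + ev a q2"
proof -
  define N where "N = max (degree q1) (degree q2)"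
  have "degree (q1 + q2) \<le> N" by (simp add: N_def degree_add_le)
  then show ?thesis
    by (simp add: ev_bound[of _ N] N_def sum.distrib[symmetric] scale_left_distrib)
qed

lemma ev_smult: "ev a (smult c q) = s c (ev a q)"
  by (simp add: ev_bound[of "smult c q" "degree q"] ev_def scale_sum_right)

lemma ev_0[simp]: "ev a 0 = 0" by (simp add: ev_def)
lemma ev_const[simp]: "ev a [:c:] = s c u" by (simp add: ev_def)
lemma ev_1[simp]: "ev a 1 = u" by (simp add: ev_def)

lemma ev_pCons: "ev a (pCons c q) = s c u + p a (ev a q)"
proof -
  have "ev a (pCons c q) = (\<Sum>i\<le>Suc (degree q). s (coeff (pCons c q) i) (pw a i))"
    by (rule ev_bound) simp
  also have "\<dots> = s c u + (\<Sum>i\<le>degree q. s (coeff q i) (pw a (Suc i)))"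
    by (subst sum.atMost_Suc_shift) simp
  also have "\<dots> = s c u + p a (ev a q)"
    by (simp add: ev_def p_sum_r p_scale_r)
  finally show ?thesis .
qed

lemma ev_mult: "ev a (q1 * q2) = p (ev a q1) (ev a q2)"
proof (induction q1 rule: pCons_induct)
  case 0 then show ?case by simp
next
  case (pCons c q)
  have "ev a (pCons c q * q2) = s c (ev a q2) + ev a (pCons 0 (q * q2))"
    by (simp add: ev_add ev_smult)
  also have "ev a (pCons 0 (q * q2)) = p a (p (ev a q) (ev a q2))"
    using pCons by (simp add: ev_pCons)
  finally show ?case by (simp add: ev_pCons p_add_l p_scale_l p_assoc)
qed

lemma ev_power: "ev a (q ^ k) = pw (ev a q) k"
  by (induction k) (auto simp: ev_mult)

lemma ev_X[simp]: "ev a [:0, 1:] = a"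
  by (simp add: ev_pCons)

lemma ev_diff: "ev a (q1 - q2) = ev a q1 - ev a q2"
  using ev_add[of a "q1 - q2" q2] by (simp add: eq_diff_eq)

lemma ev_sum: "ev a (\<Sum>i\<in>A. q i) = (\<Sum>i\<in>A. ev a (q i))"
  by (induction A rule: infinite_finite_induct) (auto simp: ev_add)

end


lemma prod_linear_dvd:
  fixes g :: "complex poly"
  assumes "finite R" "\<forall>x\<in>R. poly g x = 0"
  shows "(\<Prod>x\<in>R. [:-x, 1:]) dvd g"
  using assms
proof (induction R arbitrary: g rule: finite_induct)
  case empty then show ?case by simp
next
  case (insert z R)
  then obtain r where r: "g = (\<Prod>x\<in>R. [:-x, 1:]) * r" by (meson dvd_def insertCI)
  have "poly (\<Prod>x\<in>R. [:-x, 1:]) z \<noteq> 0" using insert by (auto simp: poly_prod)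
  moreover have "poly g z = 0" using insert by simp
  ultimately have "poly r z = 0" using r by simp
  then obtain r' where r': "r = [:-z, 1:] * r'" by (meson dvd_def poly_eq_0_iff_dvd)
  have "g = ([:-z, 1:] * (\<Prod>x\<in>R. [:-x, 1:])) * r'" unfolding r r' by (simp only: ac_simps)
  also have "[:-z, 1:] * (\<Prod>x\<in>R. [:-x, 1:]) = (\<Prod>x\<in>insert z R. [:-x, 1:])"
    using insert by simp
  finally show ?case by simp
qed

context palg begin

lemma ev_monom: "ev a (monom c k) = s c (pw a k)"
  by (simp add: monom_altdef ev_smult ev_power)

lemma annih: "\<exists>P. P \<noteq> 0 \<and> ev a P = 0"
proof -
  obtain B where "finite_dimensional_vector_space s B" using fdim by blast
  then interpret fd: finite_dimensional_vector_space s B .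
  define d where "d = dim (UNIV :: 'q set)"
  show ?thesis
  proof (cases "inj_on (pw a) {..d}")
    case False
    then obtain i j where ij: "i \<le> d" "j \<le> d" "i \<noteq> j" "pw a i = pw a j"
      by (auto simp: inj_on_def)
    define P where "P = monom (1::complex) i - monom 1 j"
    have "coeff P i = 1" using ij by (simp add: P_def)
    then have "P \<noteq> 0" by auto
    moreover have "ev a P = 0" using ij by (simp add: P_def ev_diff ev_monom)
    ultimately show ?thesis by blast
  next
    case True
    define S where "S = pw a ` {..d}"
    have cS: "card S = Suc d" using True by (simp add: S_def card_image)
    have "\<not> independent S"
    proof
      assume "independent S"
      then have "card S \<le> dim (UNIV :: 'q set)" by (intro fd.independent_card_le_dim) auto
      then show False using cS d_def by simp
    qed
    then obtain w where w: "\<exists>v\<in>S. w v \<noteq> 0" "(\<Sum>v\<in>S. s (w v) v) = 0"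
      using dependent_finite[of S] by (auto simp: S_def)
    define P where "P = (\<Sum>i\<le>d. monom (w (pw a i)) i)"
    have "ev a P = (\<Sum>i\<le>d. s (w (pw a i)) (pw a i))" by (simp add: P_def ev_sum ev_monom)
    also have "\<dots> = (\<Sum>v\<in>S. s (w v) v)" unfolding S_def using True by (simp add: sum.reindex)
    finally have "ev a P = 0" using w by simp
    moreover obtain i where i: "i \<le> d" "w (pw a i) \<noteq> 0" using w S_def by auto
    have "coeff P i = w (pw a i)" using i by (simp add: P_def coeff_sum)
    then have "P \<noteq> 0" using i by auto
    ultimately show ?thesis by blast
  qed
qed

lemma killR: "\<exists>R. finite R \<and> (\<forall>g. (\<forall>x\<in>R. poly g x = 0) \<longrightarrow> ev a g = 0)"
proof -
  obtain P where P: "P \<noteq> 0" "ev a P = 0" using annih by blast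
  define R where "R = {z. poly P z = 0}"
  have fR: "finite R" using P by (simp add: R_def poly_roots_finite)
  define q where "q = (\<Prod>z\<in>R. [:-z, 1:])"
  define L where "L = degree P"
  have "(\<Prod>z\<in>R. [:-z, 1:] ^ order z P) dvd (\<Prod>z\<in>R. [:-z, 1:] ^ L)"
    by (intro prod_dvd_prod le_imp_power_dvd) (use P in \<open>simp add: L_def order_degree\<close>)
  also have "\<dots> = q ^ L" by (simp add: q_def prod_power_distrib)
  finally have "smult (lead_coeff P) (\<Prod>z\<in>R. [:-z, 1:] ^ order z P) dvd q ^ L"
    using P by (simp add: smult_dvd_iff)
  then have "P dvd q ^ L" using complex_poly_decompose[of P] by (simp add: R_def)
  then obtain r where "q ^ L = P * r" by (auto simp: dvd_def)
  then have "pw (ev a q) L = 0" using P by (metis ev_power ev_mult p_zero_l)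
  then have q0: "ev a q = 0" by (rule pw_zero_imp)
  have "ev a g = 0" if "\<forall>x\<in>R. poly g x = 0" for g
  proof -
    have "q dvd g" unfolding q_def using prod_linear_dvd[OF fR that] .
    then obtain r where "g = q * r" by (auto simp: dvd_def)
    then show ?thesis using q0 by (simp add: ev_mult)
  qed
  then show ?thesis using fR by blast
qed

end


definition lag :: "complex set \<Rightarrow> complex \<Rightarrow> complex poly" where
  "lag R l = (\<Prod>m\<in>R - {l}. smult (1 / (l - m)) [:-m, 1:])"

lemma poly_lag: assumes "finite R" "l \<in> R" "v \<in> R"
  shows "poly (lag R l) v = (if v = l then 1 else 0)"
proof (cases "v = l")
  case True
  have "poly (lag R l) v = (\<Prod>m\<in>R - {l}. poly (smult (1 / (l - m)) [:-m, 1:]) l)"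
    using True by (simp add: lag_def poly_prod)
  also have "\<dots> = 1"
  proof (intro prod.neutral ballI)
    fix m assume "m \<in> R - {l}"
    then have "l - m \<noteq> 0" by auto
    then show "poly (smult (1 / (l - m)) [:-m, 1:]) l = 1" by (simp add: diff_divide_distrib[symmetric])
  qed
  finally show ?thesis using True by simp
next
  case False
  have "poly (lag R l) v = (\<Prod>m\<in>R - {l}. (v - m) / (l - m))" by (simp add: lag_def poly_prod diff_divide_distrib)
  also have "\<dots> = 0" using assms False by (intro prod_zero) auto
  finally show ?thesis using False by simp
qed

context palg begin

definition orth :: "'q set \<Rightarrow> bool" where
  "orth S \<longleftrightarrow> finite S \<and> (\<forall>e\<in>S. e \<noteq> 0 \<and> p e e = e) \<and> (\<forall>e\<in>S. \<forall>e'\<in>S. e \<noteq> e' \<longrightarrow> p e e' = 0)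
     \<and> (\<Sum>e\<in>S. e) = u"

lemma orth_sum_proj: assumes "orth S" "v \<in> S" shows "p v (\<Sum>x\<in>S. s (w x) x) = s (w v) v"
proof -
  have "p v (\<Sum>x\<in>S. s (w x) x) = (\<Sum>x\<in>S. s (w x) (p v x))" by (simp add: p_sum_r p_scale_r)
  also have "\<dots> = s (w v) (p v v) + (\<Sum>x\<in>S - {v}. s (w x) (p v x))"
    using assms by (simp add: orth_def sum.remove)
  also have "(\<Sum>x\<in>S - {v}. s (w x) (p v x)) = 0"
    using assms by (intro sum.neutral) (auto simp: orth_def)
  finally show ?thesis using assms by (simp add: orth_def)
qed

lemma orth_indep: assumes "orth S" shows "independent S"
proof
  assume "dependent S"
  then obtain w v where w: "v \<in> S" "w v \<noteq> 0" "(\<Sum>x\<in>S. s (w x) x) = 0"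
    using dependent_finite[of S] assms by (auto simp: orth_def)
  then have "s (w v) v = 0" using orth_sum_proj[OF assms w(1), of w] by simp
  then show False using w assms by (auto simp: orth_def)
qed

lemma dim_bound: "independent S \<Longrightarrow> card S \<le> dim (UNIV :: 'q set)"
proof -
  obtain B where "finite_dimensional_vector_space s B" using fdim by blast
  then interpret fd: finite_dimensional_vector_space s B .
  show "independent S \<Longrightarrow> card S \<le> dim (UNIV :: 'q set)" by (intro fd.independent_card_le_dim) auto
qed

lemma orth_max: "\<exists>S. orth S \<and> (\<forall>S'. orth S' \<longrightarrow> card S' \<le> card S)"
proof -
  define K where "K = {card S |S. orth S}"
  have "orth (if u = 0 then {} else {u})" by (auto simp: orth_def)
  then have ne: "K \<noteq> {}" by (auto simp: K_def)
  have "K \<subseteq> {..dim (UNIV :: 'q set)}" using orth_indep dim_bound by (auto simp: K_def)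
  then have fK: "finite K" by (rule finite_subset) simp
  have "Max K \<in> K" using fK ne by simp
  then obtain S where "orth S" "card S = Max K" by (auto simp: K_def)
  moreover have "\<forall>S'. orth S' \<longrightarrow> card S' \<le> Max K" using fK by (auto simp: K_def intro!: Max_ge)
  ultimately show ?thesis by auto
qed

end


context palg begin

lemma ev_zero_on: assumes "\<forall>x\<in>R. poly g x = 0" "\<forall>g. (\<forall>x\<in>R. poly g x = 0) \<longrightarrow> ev b g = 0"
  shows "ev b g = 0" using assms by blast

lemma split:
  assumes S: "orth S" and e: "e \<in> S" and na: "\<forall>c. p e a \<noteq> s c e"
  shows "\<exists>S'. orth S' \<and> card S < card S'"
proof -
  define b where "b = p e a"
  obtain R where fR: "finite R" and KR: "\<forall>g. (\<forall>x\<in>R. poly g x = 0) \<longrightarrow> ev b g = 0"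
    using killR[of b] by blast
  define F where "F l = ev b (lag R l)" for l
  define g where "g l = p e (F l)" for l
  have ee: "p e e = e" "e \<noteq> 0" using S e by (auto simp: orth_def)
  have F1: "(\<Sum>l\<in>R. F l) = u"
  proof -
    have "ev b ((\<Sum>l\<in>R. lag R l) - 1) = 0"
      using KR fR by (auto simp: poly_sum poly_lag if_distrib sum.delta cong: if_cong)
    then show ?thesis by (simp add: ev_diff ev_sum F_def)
  qed
  have F2: "p (F l) (F m) = 0" if "l \<in> R" "m \<in> R" "l \<noteq> m" for l m
  proof -
    have "ev b (lag R l * lag R m) = 0" using KR fR that by (auto simp: poly_lag)
    then show ?thesis by (simp add: ev_mult F_def)
  qed
  have F3: "p (F l) (F l) = F l" if "l \<in> R" for l
  proof -
    have "ev b (lag R l * lag R l - lag R l) = 0" using KR fR that by (auto simp: poly_lag)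
    then show ?thesis by (simp add: ev_mult ev_diff F_def)
  qed
  have F4: "b = (\<Sum>l\<in>R. s l (F l))"
  proof -
    have "ev b ([:0, 1:] - (\<Sum>l\<in>R. smult l (lag R l))) = 0"
      using KR fR by (auto simp: poly_sum poly_lag if_distrib sum.delta cong: if_cong)
    then show ?thesis by (simp add: ev_diff ev_sum ev_smult F_def)
  qed
  have G1: "(\<Sum>l\<in>R. g l) = e" using F1 by (simp add: g_def p_sum_r[symmetric])
  have G2: "p (g l) (g m) = 0" if "l \<in> R" "m \<in> R" "l \<noteq> m" for l m
  proof -
    have "p (g l) (g m) = p (p e e) (p (F l) (F m))" by (simp add: g_def p_assoc p_lcomm)
    then show ?thesis using F2[OF that] by simp
  qed
  have G3: "p (g l) (g l) = g l" if "l \<in> R" for l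
  proof -
    have "p (g l) (g l) = p (p e e) (p (F l) (F l))" by (simp add: g_def p_assoc p_lcomm)
    then show ?thesis using F3[OF that] ee by (simp add: g_def)
  qed
  have G4: "b = (\<Sum>l\<in>R. s l (g l))"
  proof -
    have "p e b = b" by (simp add: b_def p_assoc[symmetric] ee)
    then show ?thesis using F4 by (metis (no_types, lifting) g_def p_scale_r p_sum_r sum.cong)
  qed
  have G5: "p x (g l) = 0" if "x \<in> S" "x \<noteq> e" for x l
  proof -
    have "p x e = 0" using S e that by (auto simp: orth_def)
    then show ?thesis by (simp add: g_def p_assoc[symmetric])
  qed
  define T where "T = {l\<in>R. g l \<noteq> 0}"
  have fT: "finite T" using fR by (simp add: T_def)
  have sT1: "(\<Sum>l\<in>R. g l) = (\<Sum>l\<in>T. g l)" using fR by (intro sum.mono_neutral_right) (auto simp: T_def)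
  have sT2: "(\<Sum>l\<in>R. s l (g l)) = (\<Sum>l\<in>T. s l (g l))" using fR by (intro sum.mono_neutral_right) (auto simp: T_def)
  have cT: "2 \<le> card T"
  proof (rule ccontr)
    assume "\<not> 2 \<le> card T"
    then have "card T = 0 \<or> card T = 1" by linarith
    then show False
    proof
      assume "card T = 0"
      then have "T = {}" using fT by simp
      then show False using G1 sT1 ee by simp
    next
      assume "card T = 1"
      then obtain l where "T = {l}" by (meson card_1_singletonE)
      then have "e = g l" "b = s l (g l)" using G1 sT1 G4 sT2 by auto
      then show False using na b_def by metis
    qed
  qed
  define S' where "S' = (S - {e}) \<union> g ` T"
  have TR: "T \<subseteq> R" by (auto simp: T_def)
  have injg: "inj_on g T"
  proof
    fix l m assume lm: "l \<in> T" "m \<in> T" "g l = g m"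
    show "l = m"
    proof (rule ccontr)
      assume "l \<noteq> m"
      then have "p (g l) (g m) = 0" using G2[of l m] lm TR by blast
      then have "g l = 0" using lm G3 TR by auto
      then show False using lm by (auto simp: T_def)
    qed
  qed
  have disj: "(S - {e}) \<inter> g ` T = {}"
  proof (rule ccontr)
    assume "(S - {e}) \<inter> g ` T \<noteq> {}"
    then obtain l where l: "l \<in> T" "g l \<in> S" "g l \<noteq> e" by auto
    then have "p (g l) (g l) = 0" using G5 by auto
    then show False using G3 l TR by (auto simp: T_def)
  qed
  have fS: "finite S" using S by (simp add: orth_def)
  have "orth S'"
    unfolding orth_def
  proof (intro conjI ballI impI)
    show "finite S'" using fS fT by (simp add: S'_def)
  next
    fix x assume "x \<in> S'"
    then consider "x \<in> S" | l where "l \<in> T" "x = g l" by (auto simp: S'_def)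
    then show "x \<noteq> 0"
      by cases (use S in \<open>auto simp: orth_def T_def\<close>)
  next
    fix x assume "x \<in> S'"
    then consider "x \<in> S" | l where "l \<in> T" "x = g l" by (auto simp: S'_def)
    then show "p x x = x"
      by cases (use S G3 TR in \<open>auto simp: orth_def\<close>)
  next
    fix x y assume xy: "x \<in> S'" "y \<in> S'" "x \<noteq> y"
    show "p x y = 0"
    proof (cases "x \<in> S - {e}")
      case True
      show ?thesis
      proof (cases "y \<in> S - {e}")
        case True
        then show ?thesis using \<open>x \<in> S - {e}\<close> xy S by (auto simp: orth_def)
      next
        case False
        then obtain m where "y = g m" using xy by (auto simp: S'_def)
        then show ?thesis using G5 \<open>x \<in> S - {e}\<close> by auto
      qed
    next
      case False
      then obtain l where l: "x = g l" "l \<in> T" using xy by (auto simp: S'_def)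
      show ?thesis
      proof (cases "y \<in> S - {e}")
        case True
        then have "p y (g l) = 0" using G5[of y l] by blast
        then show ?thesis using l by (simp add: p_comm[of "g l" y])
      next
        case False
        then obtain m where m: "y = g m" "m \<in> T" using xy by (auto simp: S'_def)
        then show ?thesis using G2 l xy TR by auto
      qed
    qed
  next
    have "(\<Sum>x\<in>S'. x) = (\<Sum>x\<in>S - {e}. x) + (\<Sum>x\<in>g ` T. x)"
      unfolding S'_def using fS fT disj by (intro sum.union_disjoint) auto
    also have "(\<Sum>x\<in>g ` T. x) = (\<Sum>l\<in>T. g l)" using injg by (simp add: sum.reindex)
    also have "\<dots> = e" using G1 sT1 by simp
    also have "(\<Sum>x\<in>S - {e}. x) + e = (\<Sum>x\<in>S. x)" using fS e by (simp add: sum.remove)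
    finally show "(\<Sum>x\<in>S'. x) = u" using S by (simp add: orth_def)
  qed
  moreover have "card S' = card (S - {e}) + card T"
    unfolding S'_def using fS fT disj injg by (simp add: card_Un_disjoint card_image)
  moreover have "card (S - {e}) + 1 = card S" using card_Suc_Diff1[OF fS e] by simp
  ultimately show ?thesis using cT by auto
qed

end



context palg begin

lemma good_orth: "\<exists>S. orth S \<and> (\<forall>e\<in>S. \<forall>a. \<exists>c. p e a = s c e)"
proof -
  obtain S where S: "orth S" "\<forall>S'. orth S' \<longrightarrow> card S' \<le> card S" using orth_max by blast
  have "\<forall>e\<in>S. \<forall>a. \<exists>c. p e a = s c e"
  proof (intro ballI allI, rule ccontr)
    fix e a assume "e \<in> S" "\<not> (\<exists>c. p e a = s c e)"
    then obtain S' where "orth S'" "card S < card S'" using split[OF S(1)] by blast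
    then show False using S(2) by fastforce
  qed
  then show ?thesis using S by blast
qed

definition M :: "'q set" where "M = {e. min_idem p e}"

lemma orth_decomp: "orth S \<Longrightarrow> a = (\<Sum>e\<in>S. p e a)"
  by (simp add: orth_def p_sum_l[symmetric])

lemma M_eq: assumes S: "orth S" "\<forall>e\<in>S. \<forall>a. \<exists>c. p e a = s c e" shows "M = S"
proof -
  have SM: "S \<subseteq> M"
  proof
    fix e assume e: "e \<in> S"
    have ee: "e \<noteq> 0" "p e e = e" using S e by (auto simp: orth_def)
    have "h = 0 \<or> h = e" if h: "p h h = h" "p h e = h" for h
    proof -
      obtain c where c: "p e h = s c e" using S e by blast
      have "h = s c e" using c h p_comm by metis
      then have "s c e = s (c * c) e" using h(1) ee by (simp add: p_scale_l p_scale_r)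
      then have "c = c * c" using ee by simp
      then have "c = 0 \<or> c = 1" by (metis mult_cancel_right1 mult_eq_0_iff eq_iff_diff_eq_0 mult.commute right_diff_distrib' mult.right_neutral)
      then show ?thesis using \<open>h = s c e\<close> by auto
    qed
    then show "e \<in> M" using ee by (auto simp: M_def min_idem_def)
  qed
  have "M \<subseteq> S"
  proof
    fix m assume "m \<in> M"
    then have m: "m \<noteq> 0" "p m m = m" "\<And>h. p h h = h \<Longrightarrow> p h m = h \<Longrightarrow> h = 0 \<or> h = m"
      by (auto simp: M_def min_idem_def)
    have "m = (\<Sum>e\<in>S. p e m)" using orth_decomp[OF S(1)] .
    then obtain e where e: "e \<in> S" "p e m \<noteq> 0" using m(1) by (metis sum.neutral)
    have ee: "e \<noteq> 0" "p e e = e" "\<And>h. p h h = h \<Longrightarrow> p h e = h \<Longrightarrow> h = 0 \<or> h = e"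
      using SM e(1) by (auto simp: M_def min_idem_def)
    define h where "h = p e m"
    have hh: "p h h = h" unfolding h_def using m(2) ee(2) by (metis p_assoc p_lcomm)
    have "p h m = h" unfolding h_def using m(2) by (simp add: p_assoc)
    then have "h = m" using m(3)[OF hh] e(2) h_def by auto
    moreover have "p h e = h" unfolding h_def using ee(2) by (metis p_assoc p_comm)
    then have "h = e" using ee(3)[OF hh] e(2) h_def by auto
    ultimately show "m \<in> S" using e by simp
  qed
  then show ?thesis using SM by blast
qed

lemma M_props: "orth M" "\<forall>e\<in>M. \<forall>a. \<exists>c. p e a = s c e"
  using good_orth M_eq by metis+

lemma M_fin: "finite M" using M_props by (simp add: orth_def)
lemma M_nz: "e \<in> M \<Longrightarrow> e \<noteq> 0" using M_props by (simp add: orth_def)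
lemma M_idem: "e \<in> M \<Longrightarrow> p e e = e" using M_props by (simp add: orth_def)
lemma M_orth: "e \<in> M \<Longrightarrow> e' \<in> M \<Longrightarrow> e \<noteq> e' \<Longrightarrow> p e e' = 0" using M_props by (simp add: orth_def)
lemma M_sum: "(\<Sum>e\<in>M. e) = u" using M_props by (simp add: orth_def)
lemma M_decomp: "a = (\<Sum>e\<in>M. p e a)" using M_props orth_decomp by blast

lemma M_card: "card M = dim (UNIV :: 'q set)"
proof -
  have "UNIV \<subseteq> span M"
  proof
    fix a :: 'q
    have "p e a \<in> span M" if "e \<in> M" for e
      using M_props that by (metis span_base span_scale)
    then have "(\<Sum>e\<in>M. p e a) \<in> span M" by (intro span_sum) auto
    then show "a \<in> span M" using M_decomp by metis
  qed
  then show ?thesis using orth_indep[OF M_props(1)] by (intro basis_card_eq_dim) auto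
qed

end

context aaut begin
lemma g_M: assumes "e \<in> M" shows "g e \<in> M"
proof -
  have e: "e \<noteq> 0" "p e e = e" "\<And>h. p h h = h \<Longrightarrow> p h e = h \<Longrightarrow> h = 0 \<or> h = e"
    using assms by (auto simp: M_def min_idem_def)
  have "h = 0 \<or> h = g e" if "p h h = h" "p h (g e) = h" for h
  proof -
    have "p (g h) (g h) = g h" "p (g h) e = g h" using that by (metis g_p g_g)+
    then have "g h = 0 \<or> g h = e" using e(3) by blast
    then show ?thesis by (metis g_g g_zero)
  qed
  moreover have "g e \<noteq> 0" using e(1) g_eq0 by blast
  moreover have "p (g e) (g e) = g e" using e(2) by (metis g_p)
  ultimately show ?thesis by (auto simp: M_def min_idem_def)
qed
end

context palg begin

lemma f_M: "e \<in> M \<Longrightarrow> f e \<in> M" using aaut.g_M[OF f_aaut] .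

lemma f_fix: assumes "e \<in> M" shows "f e = e"
proof (rule ccontr)
  assume "f e \<noteq> e"
  then have "p e (f e) = 0" using M_orth[OF assms f_M[OF assms]] by simp
  then show False using pos M_nz[OF assms] by fastforce
qed

lemma t_M: assumes "e \<in> M" shows "Im (t e) = 0" "Re (t e) > 0" "t e \<noteq> 0"
proof -
  have "t e = t (p e (f e))" using assms f_fix M_idem by simp
  then show "Im (t e) = 0" "Re (t e) > 0" using pos M_nz[OF assms] by auto
  then show "t e \<noteq> 0" by auto
qed

lemma cnj_t_M: "e \<in> M \<Longrightarrow> cnj (t e) = t e"
  using t_M by (simp add: complex_eq_iff)

definition crd :: "'q \<Rightarrow> 'q \<Rightarrow> complex" where "crd e a = t (p e a) / t e"

lemma crd_eq: assumes "e \<in> M" shows "p e a = s (crd e a) e"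
proof -
  obtain c where c: "p e a = s c e" using M_props assms by blast
  then have "crd e a = c" using t_M[OF assms] by (simp add: crd_def t_scale)
  then show ?thesis using c by simp
qed

lemma crd_unique: assumes "e \<in> M" "p e a = s c e" shows "crd e a = c"
  using crd_eq[OF assms(1), of a] assms M_nz[OF assms(1)] by simp

lemma crd_lin: "crd e (s c a + b) = c * crd e a + crd e b"
  by (simp add: crd_def p_add_r p_scale_r t_add t_scale add_divide_distrib)

lemma crd_add: "crd e (a + b) = crd e a + crd e b" using crd_lin[of e 1 a b] by simp
lemma crd_scale: "crd e (s c a) = c * crd e a" using crd_lin[of e c a 0] by (simp add: crd_def)
lemma crd_zero[simp]: "crd e 0 = 0" by (simp add: crd_def)
lemma crd_sum: "crd e (\<Sum>i\<in>A. h i) = (\<Sum>i\<in>A. crd e (h i))"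
  by (induction A rule: infinite_finite_induct) (auto simp: crd_add)
lemma crd_diff: "crd e (a - b) = crd e a - crd e b" using crd_add[of e "a - b" b] by simp

lemma crd_mult: assumes "e \<in> M" shows "crd e (p a b) = crd e a * crd e b"
proof -
  have "p e (p a b) = p (p e a) (p e b)" using M_idem[OF assms] by (metis p_assoc p_lcomm)
  also have "\<dots> = s (crd e a * crd e b) e"
    using crd_eq[OF assms] M_idem[OF assms] by (simp add: p_scale_l p_scale_r)
  finally show ?thesis using crd_unique[OF assms] by blast
qed

lemma crd_u: "e \<in> M \<Longrightarrow> crd e u = 1"
  using t_M by (simp add: crd_def)

lemma crd_M: "e \<in> M \<Longrightarrow> e' \<in> M \<Longrightarrow> crd e e' = (if e = e' then 1 else 0)"
  using t_M M_idem M_orth by (simp add: crd_def)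

lemma crd_f: assumes "e \<in> M" shows "crd e (f a) = cnj (crd e a)"
proof -
  have "p e (f a) = f (p e a)" using f_fix[OF assms] by (metis f_p)
  also have "\<dots> = s (cnj (crd e a)) e" using crd_eq[OF assms] f_fix[OF assms] by (simp add: f_scale)
  finally show ?thesis using crd_unique[OF assms] by blast
qed

lemma crd_idem: assumes "e \<in> M" "p a a = a" shows "crd e a = 0 \<or> crd e a = 1"
proof -
  have "crd e a = crd e a * crd e a" using crd_mult[OF assms(1), of a a] assms(2) by simp
  then show ?thesis by (metis mult_cancel_right1 mult_eq_0_iff eq_iff_diff_eq_0 mult.commute right_diff_distrib' mult.right_neutral)
qed

lemma decomp: "a = (\<Sum>e\<in>M. s (crd e a) e)"
  using M_decomp[of a] crd_eq by (metis (no_types, lifting) sum.cong)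

lemma t_decomp: "t a = (\<Sum>e\<in>M. crd e a * t e)"
  by (subst decomp) (simp add: t_sum t_scale)

lemma eq_by_crd: "(\<And>e. e \<in> M \<Longrightarrow> crd e a = crd e b) \<Longrightarrow> a = b"
  by (metis (no_types, lifting) decomp sum.cong)

end

context aaut begin
lemma crd_g: assumes "e \<in> M" shows "crd (g e) (g a) = cnj (crd e a)"
proof -
  have "p (g e) (g a) = g (p e a)" by (simp add: g_p)
  also have "\<dots> = s (cnj (crd e a)) (g e)" using crd_eq[OF assms] by (simp add: g_scale)
  finally show ?thesis using crd_unique[OF g_M[OF assms]] by blast
qed
end



context palg begin

lemma enum_in: assumes E: "bij_betw E {..<d::nat} M" and i: "i < d" shows "E i \<in> M"
  using E i by (auto simp: bij_betw_def)

lemma enum_inj: assumes E: "bij_betw E {..<d::nat} M" and "i < d" "j < d" shows "E i = E j \<longleftrightarrow> i = j"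
  using E assms by (auto simp: bij_betw_def inj_on_def)

lemma enum_card: assumes E: "bij_betw E {..<d::nat} M" shows "d = dim (UNIV :: 'q set)"
  using bij_betw_same_card[OF E] M_card by simp

lemmas enum_props = enum_in enum_inj

lemma sum_enum: assumes E: "bij_betw E {..<d::nat} M" shows "(\<Sum>e\<in>M. h e) = (\<Sum>i<d. h (E i))"
  using sum.reindex_bij_betw[OF E, of h] by simp

lemma decomp_E: assumes E: "bij_betw E {..<d::nat} M" shows "a = (\<Sum>i<d. s (crd (E i) a) (E i))"
  using decomp[of a] sum_enum[OF E, of "\<lambda>e. s (crd e a) e"] by simp

lemma t_decomp_E: assumes E: "bij_betw E {..<d::nat} M" shows "t a = (\<Sum>i<d. crd (E i) a * t (E i))"
  using t_decomp[of a] sum_enum[OF E, of "\<lambda>e. crd e a * t e"] by simp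

lemma crd_basis_E: assumes E: "bij_betw E {..<d::nat} M" and j: "j < d"
  shows "crd (E j) (\<Sum>i<d. s (h i) (E i)) = h j"
proof -
  have "crd (E j) (\<Sum>i<d. s (h i) (E i)) = (\<Sum>i<d. h i * crd (E j) (E i))"
    by (simp add: crd_sum crd_scale)
  also have "\<dots> = (\<Sum>i<d. if i = j then h i else 0)"
    using enum_in[OF E] enum_inj[OF E] j by (intro sum.cong) (auto simp: crd_M)
  also have "\<dots> = h j" using j by (simp add: sum.delta)
  finally show ?thesis .
qed

lemma eq_by_crd_E: assumes E: "bij_betw E {..<d::nat} M" and "\<And>i. i < d \<Longrightarrow> crd (E i) a = crd (E i) b"
  shows "a = b"
  by (metis (no_types, lifting) E assms(2) decomp_E sum.cong lessThan_iff)

lemma parseval_E: assumes E: "bij_betw E {..<d::nat} M"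
  shows "t (p a (f b)) = (\<Sum>i<d. crd (E i) a * cnj (crd (E i) b) * t (E i))"
  using t_decomp_E[OF E, of "p a (f b)"] enum_in[OF E]
  by (simp add: crd_mult crd_f)

lemma crd_form: assumes "e \<in> M" shows "crd e a = t (p a (f e)) / t e"
  using assms f_fix by (simp add: crd_def p_comm)

lemma cd_iso: assumes E: "bij_betw E {..<d::nat} M"
  shows "\<exists>\<phi>. (\<forall>c a b i. \<phi> (s c a + b) i = c * \<phi> a i + \<phi> b i) \<and>
     bij_betw \<phi> UNIV {h :: nat \<Rightarrow> complex. \<forall>i\<ge>d. h i = 0} \<and>
     (\<forall>a b i. \<phi> (p a b) i = \<phi> a i * \<phi> b i) \<and> (\<forall>i<d. \<phi> u i = 1)"
proof -
  define \<phi> where "\<phi> a i = (if i < d then crd (E i) a else 0)" for a i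
  have "bij_betw \<phi> UNIV {h. \<forall>i\<ge>d. h i = 0}"
    unfolding bij_betw_def
  proof (intro conjI)
    show "inj \<phi>"
    proof
      fix a b assume "\<phi> a = \<phi> b"
      then have "crd (E i) a = crd (E i) b" if "i < d" for i using that by (metis \<phi>_def)
      then show "a = b" by (rule eq_by_crd_E[OF E])
    qed
    show "range \<phi> = {h. \<forall>i\<ge>d. h i = 0}"
    proof (intro equalityI subsetI)
      fix h assume "h \<in> range \<phi>" then show "h \<in> {h. \<forall>i\<ge>d. h i = 0}" by (auto simp: \<phi>_def dest: leD)
    next
      fix h :: "nat \<Rightarrow> complex" assume h: "h \<in> {h. \<forall>i\<ge>d. h i = 0}"
      have "\<phi> (\<Sum>i<d. s (h i) (E i)) = h"
        using h crd_basis_E[OF E] by (auto simp: \<phi>_def fun_eq_iff)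
      then show "h \<in> range \<phi>" by (metis rangeI)
    qed
  qed
  moreover have "\<forall>c a b i. \<phi> (s c a + b) i = c * \<phi> a i + \<phi> b i" by (simp add: \<phi>_def crd_lin)
  moreover have "\<forall>a b i. \<phi> (p a b) i = \<phi> a i * \<phi> b i"
    using enum_in[OF E] by (simp add: \<phi>_def crd_mult)
  moreover have "\<forall>i<d. \<phi> u i = 1" using enum_in[OF E] by (simp add: \<phi>_def crd_u)
  ultimately show ?thesis by blast
qed

lemma exists_enum: "\<exists>E. bij_betw E {..<dim (UNIV :: 'q set)} M"
  using ex_bij_betw_nat_finite[OF M_fin] M_card by (auto simp: atLeast0LessThan)

end



locale calg =
  fixes Q :: "'q::ab_group_add chalg" and n :: real
  assumes ca: "char_alg Q n"
begin

lemma ax_tr_dot_pi: "tr_dot Q (piQ Q a) = cnj (tr_dot Q a)" using ca by (simp add: char_alg_def)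
lemma ax_tr_dot_mu: "tr_dot Q (muQ Q a) = cnj (tr_dot Q a)" using ca by (simp add: char_alg_def)
lemma ax_tr_cross_pi: "tr_cross Q (piQ Q a) = cnj (tr_cross Q a)" using ca by (simp add: char_alg_def)
lemma ax_tr_cross_mu: "tr_cross Q (muQ Q a) = cnj (tr_cross Q a)" using ca by (simp add: char_alg_def)
lemma ax_form: "tr_dot Q (dotp Q a (piQ Q b)) = tr_cross Q (crossp Q a (muQ Q b))"
  using ca by (simp add: char_alg_def)
lemma ax_pos: "a \<noteq> 0 \<Longrightarrow> Im (ip Q a a) = 0 \<and> Re (ip Q a a) > 0" using ca by (simp add: char_alg_def)
lemma ax_one_cross: "dotp Q (one_cross Q) (one_cross Q) = one_cross Q" using ca by (simp add: char_alg_def)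
lemma ax_n: "n > 0" "crossp Q (one_dot Q) (one_dot Q) = scl Q (complex_of_real n) (one_dot Q)"
  using ca by (simp_all add: char_alg_def)
lemma ax_pi: "antilin_inv_aut (scl Q) (dotp Q) (crossp Q) (piQ Q)" using ca by (simp add: char_alg_def)
lemma ax_mu: "antilin_inv_aut (scl Q) (dotp Q) (crossp Q) (muQ Q)" using ca by (simp add: char_alg_def)

lemma ip_cross: "ip Q a b = tr_cross Q (crossp Q a (muQ Q b))"
  by (simp add: ip_def ax_form)

end

sublocale calg \<subseteq> D: palg "scl Q" "dotp Q" "one_dot Q" "tr_dot Q" "piQ Q"
proof -
  show "palg (scl Q) (dotp Q) (one_dot Q) (tr_dot Q) (piQ Q)"
    unfolding palg_def
  proof (intro conjI)
    show "antilin_inv_aut (scl Q) (dotp Q) (dotp Q) (piQ Q)" using ax_pi by (simp add: antilin_inv_aut_def)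
    show "\<forall>a. a \<noteq> 0 \<longrightarrow> Im (tr_dot Q (dotp Q a (piQ Q a))) = 0 \<and> 0 < Re (tr_dot Q (dotp Q a (piQ Q a)))"
      using ax_pos by (simp add: ip_def)
  qed (use ca in \<open>simp_all add: char_alg_def\<close>)
qed

sublocale calg \<subseteq> C: palg "scl Q" "crossp Q" "one_cross Q" "tr_cross Q" "muQ Q"
proof -
  show "palg (scl Q) (crossp Q) (one_cross Q) (tr_cross Q) (muQ Q)"
    unfolding palg_def
  proof (intro conjI)
    show "antilin_inv_aut (scl Q) (crossp Q) (crossp Q) (muQ Q)" using ax_mu by (simp add: antilin_inv_aut_def)
    show "\<forall>a. a \<noteq> 0 \<longrightarrow> Im (tr_cross Q (crossp Q a (muQ Q a))) = 0 \<and> 0 < Re (tr_cross Q (crossp Q a (muQ Q a)))"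
      using ax_pos by (simp add: ip_cross)
  qed (use ca in \<open>simp_all add: char_alg_def\<close>)
qed

sublocale calg \<subseteq> mD: aaut "scl Q" "dotp Q" "one_dot Q" "tr_dot Q" "piQ Q" "muQ Q"
  by unfold_locales (use ax_mu in \<open>simp add: antilin_inv_aut_def\<close>)

sublocale calg \<subseteq> pC: aaut "scl Q" "crossp Q" "one_cross Q" "tr_cross Q" "muQ Q" "piQ Q"
  by unfold_locales (use ax_pi in \<open>simp add: antilin_inv_aut_def\<close>)

context calg begin

lemma mu_dot: "muQ Q (dotp Q a b) = dotp Q (muQ Q a) (muQ Q b)" using mD.g_p .
lemma mu_cross: "muQ Q (crossp Q a b) = crossp Q (muQ Q a) (muQ Q b)" using C.f_p .
lemma pi_dot: "piQ Q (dotp Q a b) = dotp Q (piQ Q a) (piQ Q b)" using D.f_p .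
lemma pi_cross: "piQ Q (crossp Q a b) = crossp Q (piQ Q a) (piQ Q b)" using pC.g_p .

lemma ip_herm: "cnj (ip Q a b) = ip Q b a"
  by (simp add: ip_def ax_tr_dot_pi[symmetric] pi_dot D.f_f D.p_comm)

lemma ip_lin_l: "ip Q (scl Q c a + a') b = c * ip Q a b + ip Q a' b"
  by (simp add: ip_def D.p_lin D.t_lin)
lemma ip_scale_l: "ip Q (scl Q c a) b = c * ip Q a b" using ip_lin_l[of c a 0 b] by (simp add: ip_def)
lemma ip_sum_l: "ip Q (\<Sum>i\<in>A. h i) b = (\<Sum>i\<in>A. ip Q (h i) b)"
  by (simp add: ip_def D.p_sum_l D.t_sum)
lemma ip_sum_r: "ip Q a (\<Sum>i\<in>A. h i) = (\<Sum>i\<in>A. ip Q a (h i))"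
  by (metis (mono_tags, lifting) ip_herm ip_sum_l cnj_sum sum.cong)
lemma ip_scale_r: "ip Q a (scl Q c b) = cnj c * ip Q a b"
  by (metis ip_herm ip_scale_l complex_cnj_mult complex_cnj_cnj)

lemma ip_XX: "e \<in> D.M \<Longrightarrow> ip Q e e = tr_dot Q e"
  by (simp add: ip_def D.f_fix D.M_idem)
lemma ip_PP: "e \<in> C.M \<Longrightarrow> ip Q e e = tr_cross Q e"
  by (simp add: ip_cross C.f_fix C.M_idem)

lemma crdD: "e \<in> D.M \<Longrightarrow> D.crd e a = ip Q a e / tr_dot Q e"
  by (simp add: D.crd_form ip_def)
lemma crdC: "e \<in> C.M \<Longrightarrow> C.crd e a = ip Q a e / tr_cross Q e"
  by (simp add: C.crd_form ip_cross)

lemma cdim_eq: "cdim Q = D.dim UNIV" by (simp add: cdim_def)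

end



context calg begin

lemma perm_exists:
  assumes E: "bij_betw E {..<d::nat} S" and g: "\<And>i. i < d \<Longrightarrow> g (E i) \<in> S" and gg: "\<And>a. g (g a) = a"
  shows "\<exists>m. \<forall>i<d. m i < d \<and> m (m i) = i \<and> g (E i) = E (m i)"
proof -
  define m where "m i = inv_into {..<d} E (g (E i))" for i
  have m1: "m i < d" "E (m i) = g (E i)" if "i < d" for i
    using E g[OF that] unfolding m_def
    by (auto simp: bij_betw_def intro: inv_into_into f_inv_into_f)
  have "m (m i) = i" if "i < d" for i
  proof -
    have "E (m (m i)) = E i" using m1 that gg by simp
    then show ?thesis using E m1 that by (auto simp: bij_betw_def inj_on_def)
  qed
  then show ?thesis using m1 by metis
qed

lemma part2:
  assumes X: "bij_betw X {..<cdim Q} D.M" and P: "bij_betw \<Psi> {..<cdim Q} C.M"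
  shows "(\<forall>i<cdim Q. piQ Q (X i) = X i) \<and> (\<forall>j<cdim Q. muQ Q (\<Psi> j) = \<Psi> j) \<and>
       (\<exists>m p. (\<forall>i<cdim Q. m i < cdim Q \<and> m (m i) = i \<and> muQ Q (X i) = X (m i)) \<and>
              (\<forall>j<cdim Q. p j < cdim Q \<and> p (p j) = j \<and> piQ Q (\<Psi> j) = \<Psi> (p j)) \<and>
              (\<forall>i<cdim Q. ip Q (X (m i)) (X (m i)) = ip Q (X i) (X i)) \<and>
              (\<forall>j<cdim Q. ip Q (\<Psi> (p j)) (\<Psi> (p j)) = ip Q (\<Psi> j) (\<Psi> j)) \<and>
              (\<forall>i<cdim Q. \<forall>j<cdim Q. ip Q (X i) (\<Psi> (p j)) = cnj (ip Q (X i) (\<Psi> j))) \<and>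
              (\<forall>i<cdim Q. \<forall>j<cdim Q. ip Q (X (m i)) (\<Psi> j) = cnj (ip Q (X i) (\<Psi> j))))"
proof -
  have Xi: "X i \<in> D.M" if "i < cdim Q" for i using D.enum_in[OF X] that .
  have Pj: "\<Psi> j \<in> C.M" if "j < cdim Q" for j using C.enum_in[OF P] that .
  obtain m where m: "\<forall>i<cdim Q. m i < cdim Q \<and> m (m i) = i \<and> muQ Q (X i) = X (m i)"
    using perm_exists[OF X, of "muQ Q"] Xi mD.g_M by auto
  obtain p where p: "\<forall>j<cdim Q. p j < cdim Q \<and> p (p j) = j \<and> piQ Q (\<Psi> j) = \<Psi> (p j)"
    using perm_exists[OF P, of "piQ Q"] Pj pC.g_M by auto
  have a1: "\<forall>i<cdim Q. ip Q (X (m i)) (X (m i)) = ip Q (X i) (X i)"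
  proof (intro allI impI)
    fix i assume i: "i < cdim Q"
    have "ip Q (X (m i)) (X (m i)) = tr_dot Q (muQ Q (X i))" using m i Xi by (metis ip_XX)
    also have "\<dots> = tr_dot Q (X i)" using ax_tr_dot_mu D.cnj_t_M Xi i by simp
    finally show "ip Q (X (m i)) (X (m i)) = ip Q (X i) (X i)" using ip_XX Xi i by simp
  qed
  have a2: "\<forall>j<cdim Q. ip Q (\<Psi> (p j)) (\<Psi> (p j)) = ip Q (\<Psi> j) (\<Psi> j)"
  proof (intro allI impI)
    fix j assume j: "j < cdim Q"
    have "ip Q (\<Psi> (p j)) (\<Psi> (p j)) = tr_cross Q (piQ Q (\<Psi> j))" using p j Pj by (metis ip_PP)
    also have "\<dots> = tr_cross Q (\<Psi> j)" using ax_tr_cross_pi C.cnj_t_M Pj j by simp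
    finally show "ip Q (\<Psi> (p j)) (\<Psi> (p j)) = ip Q (\<Psi> j) (\<Psi> j)" using ip_PP Pj j by simp
  qed
  have a3: "ip Q a (piQ Q b) = cnj (ip Q a b)" if "piQ Q a = a" for a b
  proof -
    have "cnj (ip Q a b) = tr_dot Q (piQ Q (dotp Q a (piQ Q b)))" by (simp add: ip_def ax_tr_dot_pi)
    also have "\<dots> = tr_dot Q (dotp Q a b)" using that by (simp add: pi_dot D.f_f)
    finally show ?thesis by (simp add: ip_def D.f_f)
  qed
  have a4: "ip Q (muQ Q a) b = cnj (ip Q a b)" if "muQ Q b = b" for a b
  proof -
    have "cnj (ip Q a b) = tr_cross Q (muQ Q (crossp Q a (muQ Q b)))" by (simp add: ip_cross ax_tr_cross_mu)
    also have "\<dots> = tr_cross Q (crossp Q (muQ Q a) b)" using that by (simp add: mu_cross C.f_f)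
    finally show ?thesis using that by (simp add: ip_cross)
  qed
  have fX: "\<forall>i<cdim Q. piQ Q (X i) = X i" using Xi D.f_fix by blast
  have fP: "\<forall>j<cdim Q. muQ Q (\<Psi> j) = \<Psi> j" using Pj C.f_fix by blast
  have "\<forall>i<cdim Q. \<forall>j<cdim Q. ip Q (X i) (\<Psi> (p j)) = cnj (ip Q (X i) (\<Psi> j))"
    using p a3 fX by metis
  moreover have "\<forall>i<cdim Q. \<forall>j<cdim Q. ip Q (X (m i)) (\<Psi> j) = cnj (ip Q (X i) (\<Psi> j))"
    using m a4 fP by metis
  ultimately show ?thesis using fX fP m p a1 a2 by blast
qed

lemma part3:
  assumes X: "bij_betw X {..<cdim Q} D.M" and P: "bij_betw \<Psi> {..<cdim Q} C.M"
  shows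
   "(\<forall>i<cdim Q. \<forall>i'<cdim Q. ip Q (X i) (X i') = (if i = i' then ip Q (X i) (X i) else 0)) \<and>
    (\<forall>j<cdim Q. \<forall>j'<cdim Q. ip Q (\<Psi> j) (\<Psi> j') = (if j = j' then ip Q (\<Psi> j) (\<Psi> j) else 0)) \<and>
    (\<forall>i<cdim Q. ip Q (X i) (X i) = tr_dot Q (X i) \<and>
                Im (tr_dot Q (X i)) = 0 \<and> Re (tr_dot Q (X i)) > 0) \<and>
    (\<forall>j<cdim Q. ip Q (\<Psi> j) (\<Psi> j) = tr_cross Q (\<Psi> j) \<and>
                Im (tr_cross Q (\<Psi> j)) = 0 \<and> Re (tr_cross Q (\<Psi> j)) > 0) \<and>
    (\<forall>k<cdim Q. \<forall>l<cdim Q.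
       (if k = l then ip Q (\<Psi> k) (\<Psi> k) else 0) =
       (\<Sum>i<cdim Q. inverse (ip Q (X i) (X i)) * cnj (ip Q (X i) (\<Psi> k)) * ip Q (X i) (\<Psi> l))) \<and>
    (\<forall>i<cdim Q. \<forall>j<cdim Q.
       (if i = j then ip Q (X i) (X i) else 0) =
       (\<Sum>s<cdim Q. inverse (ip Q (\<Psi> s) (\<Psi> s)) * ip Q (X i) (\<Psi> s) * cnj (ip Q (X j) (\<Psi> s))))"
proof -
  have Xi: "X i \<in> D.M" if "i < cdim Q" for i using D.enum_in[OF X] that .
  have Pj: "\<Psi> j \<in> C.M" if "j < cdim Q" for j using C.enum_in[OF P] that .
  have o1: "ip Q (X i) (X i') = (if i = i' then ip Q (X i) (X i) else 0)" if "i < cdim Q" "i' < cdim Q" for i i'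
    using that Xi D.enum_inj[OF X] D.M_orth by (simp add: ip_def D.f_fix)
  have o2: "ip Q (\<Psi> j) (\<Psi> j') = (if j = j' then ip Q (\<Psi> j) (\<Psi> j) else 0)" if "j < cdim Q" "j' < cdim Q" for j j'
    using that Pj C.enum_inj[OF P] C.M_orth by (simp add: ip_cross C.f_fix)
  have s1: "(if k = l then ip Q (\<Psi> k) (\<Psi> k) else 0) =
       (\<Sum>i<cdim Q. inverse (ip Q (X i) (X i)) * cnj (ip Q (X i) (\<Psi> k)) * ip Q (X i) (\<Psi> l))"
    if "k < cdim Q" "l < cdim Q" for k l
  proof -
    have "ip Q (\<Psi> k) (\<Psi> l) = (\<Sum>i<cdim Q. D.crd (X i) (\<Psi> k) * cnj (D.crd (X i) (\<Psi> l)) * tr_dot Q (X i))"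
      unfolding ip_def by (rule D.parseval_E[OF X])
    also have "\<dots> = (\<Sum>i<cdim Q. inverse (ip Q (X i) (X i)) * cnj (ip Q (X i) (\<Psi> k)) * ip Q (X i) (\<Psi> l))"
    proof (intro sum.cong refl)
      fix i assume "i \<in> {..<cdim Q}"
      then have i: "X i \<in> D.M" using Xi by simp
      have A: "cnj (tr_dot Q (X i)) = tr_dot Q (X i)" "tr_dot Q (X i) \<noteq> 0" using D.cnj_t_M D.t_M i by auto
      show "D.crd (X i) (\<Psi> k) * cnj (D.crd (X i) (\<Psi> l)) * tr_dot Q (X i) =
            inverse (ip Q (X i) (X i)) * cnj (ip Q (X i) (\<Psi> k)) * ip Q (X i) (\<Psi> l)"
      proof -
        have h: "ip Q (\<Psi> k) (X i) = cnj (ip Q (X i) (\<Psi> k))" "ip Q (\<Psi> l) (X i) = cnj (ip Q (X i) (\<Psi> l))"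
          using ip_herm by metis+
        show ?thesis using A by (simp add: crdD[OF i] ip_XX[OF i] h field_simps)
      qed
    qed
    finally show ?thesis using o2 that by simp
  qed
  have s2: "(if i = j then ip Q (X i) (X i) else 0) =
       (\<Sum>s<cdim Q. inverse (ip Q (\<Psi> s) (\<Psi> s)) * ip Q (X i) (\<Psi> s) * cnj (ip Q (X j) (\<Psi> s)))"
    if "i < cdim Q" "j < cdim Q" for i j
  proof -
    have "ip Q (X i) (X j) = (\<Sum>s<cdim Q. C.crd (\<Psi> s) (X i) * cnj (C.crd (\<Psi> s) (X j)) * tr_cross Q (\<Psi> s))"
      unfolding ip_cross by (rule C.parseval_E[OF P])
    also have "\<dots> = (\<Sum>s<cdim Q. inverse (ip Q (\<Psi> s) (\<Psi> s)) * ip Q (X i) (\<Psi> s) * cnj (ip Q (X j) (\<Psi> s)))"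
    proof (intro sum.cong refl)
      fix s assume "s \<in> {..<cdim Q}"
      then have sP: "\<Psi> s \<in> C.M" using Pj by simp
      have B: "cnj (tr_cross Q (\<Psi> s)) = tr_cross Q (\<Psi> s)" "tr_cross Q (\<Psi> s) \<noteq> 0" using C.cnj_t_M C.t_M sP by auto
      show "C.crd (\<Psi> s) (X i) * cnj (C.crd (\<Psi> s) (X j)) * tr_cross Q (\<Psi> s) =
            inverse (ip Q (\<Psi> s) (\<Psi> s)) * ip Q (X i) (\<Psi> s) * cnj (ip Q (X j) (\<Psi> s))"
        using B by (simp add: crdC[OF sP] ip_PP[OF sP] field_simps)
    qed
    finally show ?thesis using o1 that by simp
  qed
  have t1: "ip Q (X i) (X i) = tr_dot Q (X i) \<and> Im (tr_dot Q (X i)) = 0 \<and> Re (tr_dot Q (X i)) > 0"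
    if "i < cdim Q" for i using Xi[OF that] ip_XX D.t_M by auto
  have t2: "ip Q (\<Psi> j) (\<Psi> j) = tr_cross Q (\<Psi> j) \<and> Im (tr_cross Q (\<Psi> j)) = 0 \<and> Re (tr_cross Q (\<Psi> j)) > 0"
    if "j < cdim Q" for j using Pj[OF that] ip_PP C.t_M by auto
  show ?thesis using o1 o2 s1 s2 t1 t2 by blast
qed

end


context calg begin

lemma ip_v: "ip Q a (scl Q (complex_of_real (1 / n)) (one_dot Q)) = complex_of_real (1 / n) * tr_dot Q a"
proof -
  have "ip Q a (scl Q (complex_of_real (1 / n)) (one_dot Q)) = cnj (complex_of_real (1 / n)) * ip Q a (one_dot Q)"
    by (rule ip_scale_r)
  also have "ip Q a (one_dot Q) = tr_dot Q a" by (simp add: ip_def D.f_u)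
  finally show ?thesis by (simp only: complex_cnj_complex_of_real)
qed

lemma ip_onecross: "muQ Q b = b \<Longrightarrow> ip Q (one_cross Q) b = tr_cross Q b"
  by (simp add: ip_cross)

lemma v_idem: "crossp Q (scl Q (complex_of_real (1 / n)) (one_dot Q)) (scl Q (complex_of_real (1 / n)) (one_dot Q))
         = scl Q (complex_of_real (1 / n)) (one_dot Q)"
proof -
  have "crossp Q (scl Q (complex_of_real (1 / n)) (one_dot Q)) (scl Q (complex_of_real (1 / n)) (one_dot Q))
     = scl Q (complex_of_real (1 / n) * (complex_of_real (1 / n) * complex_of_real n)) (one_dot Q)"
    by (simp add: C.p_scale_l C.p_scale_r ax_n D.scale_scale)
  also have "complex_of_real (1 / n) * (complex_of_real (1 / n) * complex_of_real n) = complex_of_real (1 / n)"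
    using ax_n(1) by (simp flip: of_real_mult)
  finally show ?thesis .
qed

lemma part5:
  assumes X: "bij_betw X {..<cdim Q} D.M" and P: "bij_betw \<Psi> {..<cdim Q} C.M"
  shows
  "crossp Q (scl Q (complex_of_real (1 / n)) (one_dot Q)) (scl Q (complex_of_real (1 / n)) (one_dot Q))
         = scl Q (complex_of_real (1 / n)) (one_dot Q) \<and>
       dotp Q (one_cross Q) (one_cross Q) = one_cross Q \<and>
       (\<exists>nn mm. (\<forall>j<cdim Q. nn j \<in> {0, 1}) \<and> (\<forall>i<cdim Q. mm i \<in> {0, 1}) \<and>
          scl Q (complex_of_real (1 / n)) (one_dot Q) = (\<Sum>j<cdim Q. scl Q (nn j) (\<Psi> j)) \<and>
          one_cross Q = (\<Sum>i<cdim Q. scl Q (mm i) (X i)) \<and>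
          (\<forall>i<cdim Q. ip Q (X i) (X i) = complex_of_real n * (\<Sum>j<cdim Q. ip Q (X i) (\<Psi> j) * nn j)) \<and>
          (\<forall>j<cdim Q. ip Q (\<Psi> j) (\<Psi> j) = (\<Sum>i<cdim Q. ip Q (X i) (\<Psi> j) * mm i))) \<and>
       ((scl Q (complex_of_real (1 / n)) (one_dot Q) = \<Psi> 0 \<and> one_cross Q = X 0) \<longrightarrow>
          (\<forall>i<cdim Q. ip Q (X i) (X i) = complex_of_real n * ip Q (X i) (\<Psi> 0)) \<and>
          (\<forall>j<cdim Q. ip Q (\<Psi> j) (\<Psi> j) = ip Q (X 0) (\<Psi> j)))"
proof -
  have Xi: "X i \<in> D.M" if "i < cdim Q" for i using D.enum_in[OF X] that .
  have Pj: "\<Psi> j \<in> C.M" if "j < cdim Q" for j using C.enum_in[OF P] that .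
  define v where "v = scl Q (complex_of_real (1 / n)) (one_dot Q)"
  have n0: "complex_of_real n \<noteq> 0" using ax_n by simp
  have c1: "complex_of_real n * complex_of_real (1 / n) = 1" using n0 by simp
  have nA: "complex_of_real n * ip Q a v = tr_dot Q a" for a
    unfolding v_def ip_v mult.assoc[symmetric] c1 by simp
  have vid: "crossp Q v v = v" using v_idem by (simp add: v_def)
  define nn where "nn j = C.crd (\<Psi> j) v" for j
  define mm where "mm i = D.crd (X i) (one_cross Q)" for i
  have nn01: "\<forall>j<cdim Q. nn j \<in> {0, 1}" using C.crd_idem[OF Pj vid] by (auto simp: nn_def)
  have mm01: "\<forall>i<cdim Q. mm i \<in> {0, 1}" using D.crd_idem[OF Xi ax_one_cross] by (auto simp: mm_def)
  have vdec: "v = (\<Sum>j<cdim Q. scl Q (nn j) (\<Psi> j))" unfolding nn_def by (rule C.decomp_E[OF P])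
  have udec: "one_cross Q = (\<Sum>i<cdim Q. scl Q (mm i) (X i))" unfolding mm_def by (rule D.decomp_E[OF X])
  have eA: "ip Q (X i) (X i) = complex_of_real n * (\<Sum>j<cdim Q. ip Q (X i) (\<Psi> j) * nn j)"
    if i: "i < cdim Q" for i
  proof -
    have "ip Q (X i) v = (\<Sum>j<cdim Q. cnj (nn j) * ip Q (X i) (\<Psi> j))"
      by (subst vdec) (simp add: ip_sum_r ip_scale_r)
    also have "\<dots> = (\<Sum>j<cdim Q. ip Q (X i) (\<Psi> j) * nn j)"
      using nn01 by (intro sum.cong refl) auto
    finally show ?thesis using nA[of "X i"] ip_XX[OF Xi[OF i]] by simp
  qed
  have eB: "ip Q (\<Psi> j) (\<Psi> j) = (\<Sum>i<cdim Q. ip Q (X i) (\<Psi> j) * mm i)" if j: "j < cdim Q" for j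
  proof -
    have "ip Q (one_cross Q) (\<Psi> j) = (\<Sum>i<cdim Q. mm i * ip Q (X i) (\<Psi> j))"
      by (subst udec) (simp add: ip_sum_l ip_scale_l)
    then show ?thesis using ip_onecross[OF C.f_fix[OF Pj[OF j]]] ip_PP[OF Pj[OF j]] by (simp add: mult.commute)
  qed
  have sp: "(\<forall>i<cdim Q. ip Q (X i) (X i) = complex_of_real n * ip Q (X i) (\<Psi> 0)) \<and>
          (\<forall>j<cdim Q. ip Q (\<Psi> j) (\<Psi> j) = ip Q (X 0) (\<Psi> j))" if "v = \<Psi> 0" "one_cross Q = X 0"
  proof (intro conjI allI impI)
    fix i assume "i < cdim Q"
    then show "ip Q (X i) (X i) = complex_of_real n * ip Q (X i) (\<Psi> 0)"
      using nA[of "X i"] ip_XX[OF Xi] that by simp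
  next
    fix j assume j: "j < cdim Q"
    then show "ip Q (\<Psi> j) (\<Psi> j) = ip Q (X 0) (\<Psi> j)"
      using ip_onecross[OF C.f_fix[OF Pj[OF j]]] ip_PP[OF Pj[OF j]] that by simp
  qed
  show ?thesis
    using vid ax_one_cross nn01 mm01 vdec udec eA eB sp unfolding v_def by blast
qed

end



lemma part4:
  fixes Q :: "'q::ab_group_add chalg" and Q' :: "'r::ab_group_add chalg"
  assumes cQ: "char_alg Q n" and cQ': "char_alg Q' n'"
  and X: "bij_betw X {..<cdim Q} {e. min_idem (dotp Q) e}"
  and P: "bij_betw \<Psi> {..<cdim Q} {e. min_idem (crossp Q) e}"
  and X': "bij_betw X' {..<cdim Q} {e. min_idem (dotp Q') e}"
  and P': "bij_betw \<Psi>' {..<cdim Q} {e. min_idem (crossp Q') e}"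
  and hA: "\<forall>i<cdim Q. ip Q' (X' i) (X' i) = ip Q (X i) (X i)"
  and hB: "\<forall>j<cdim Q. ip Q' (\<Psi>' j) (\<Psi>' j) = ip Q (\<Psi> j) (\<Psi> j)"
  and hC: "\<forall>i<cdim Q. \<forall>j<cdim Q. ip Q' (X' i) (\<Psi>' j) = ip Q (X i) (\<Psi> j)"
  and hmu: "\<forall>i<cdim Q. \<forall>k<cdim Q. muQ Q (X i) = X k \<longleftrightarrow> muQ Q' (X' i) = X' k"
  shows "\<exists>\<phi>. chalg_iso Q Q' \<phi>"
proof -
  interpret A: calg Q n by (rule calg.intro[OF cQ])
  interpret B: calg Q' n' by (rule calg.intro[OF cQ'])
  define d where "d = cdim Q"
  have X: "bij_betw X {..<d} A.D.M" using X by (simp add: d_def A.D.M_def)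
  have P: "bij_betw \<Psi> {..<d} A.C.M" using P by (simp add: d_def A.C.M_def)
  have X': "bij_betw X' {..<d} B.D.M" using X' by (simp add: d_def B.D.M_def)
  have P': "bij_betw \<Psi>' {..<d} B.C.M" using P' by (simp add: d_def B.C.M_def)
  have Xi: "X i \<in> A.D.M" if "i < d" for i using A.D.enum_in[OF X] that .
  have Pj: "\<Psi> j \<in> A.C.M" if "j < d" for j using A.C.enum_in[OF P] that .
  have Xi': "X' i \<in> B.D.M" if "i < d" for i using B.D.enum_in[OF X'] that .
  have Pj': "\<Psi>' j \<in> B.C.M" if "j < d" for j using B.C.enum_in[OF P'] that .
  define \<phi> where "\<phi> a = (\<Sum>i<d. scl Q' (A.D.crd (X i) a) (X' i))" for a
  have K1: "B.D.crd (X' i) (\<phi> a) = A.D.crd (X i) a" if "i < d" for i a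
    unfolding \<phi>_def using B.D.crd_basis_E[OF X' that] .
  have EQ': "x = y" if "\<And>i. i < d \<Longrightarrow> B.D.crd (X' i) x = B.D.crd (X' i) y" for x y
    using B.D.eq_by_crd_E[OF X'] that by blast
  have EQ: "x = y" if "\<And>i. i < d \<Longrightarrow> A.D.crd (X i) x = A.D.crd (X i) y" for x y
    using A.D.eq_by_crd_E[OF X] that by blast
  have EQc: "x = y" if "\<And>j. j < d \<Longrightarrow> B.C.crd (\<Psi>' j) x = B.C.crd (\<Psi>' j) y" for x y
    using B.C.eq_by_crd_E[OF P'] that by blast
  have lin: "\<phi> (scl Q c a + b) = scl Q' c (\<phi> a) + \<phi> b" for c a b
    by (rule EQ') (simp add: K1 B.D.crd_lin A.D.crd_lin)
  have XP: "B.D.crd (X' i) (\<Psi>' j) = A.D.crd (X i) (\<Psi> j)" if "i < d" "j < d" for i j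
  proof -
    have "B.D.crd (X' i) (\<Psi>' j) = cnj (ip Q' (X' i) (\<Psi>' j)) / ip Q' (X' i) (X' i)"
      using B.crdD[OF Xi'[OF that(1)]] B.ip_XX[OF Xi'[OF that(1)]] B.ip_herm by metis
    also have "\<dots> = cnj (ip Q (X i) (\<Psi> j)) / ip Q (X i) (X i)" using hA hC that by (simp add: d_def)
    also have "\<dots> = A.D.crd (X i) (\<Psi> j)"
      using A.crdD[OF Xi[OF that(1)]] A.ip_XX[OF Xi[OF that(1)]] A.ip_herm by metis
    finally show ?thesis .
  qed
  have phiP: "\<phi> a = (\<Sum>j<d. scl Q' (A.C.crd (\<Psi> j) a) (\<Psi>' j))" for a
  proof (rule EQ')
    fix i assume i: "i < d"
    have "B.D.crd (X' i) (\<Sum>j<d. scl Q' (A.C.crd (\<Psi> j) a) (\<Psi>' j))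
        = (\<Sum>j<d. A.C.crd (\<Psi> j) a * A.D.crd (X i) (\<Psi> j))"
      using XP[OF i] by (simp add: B.D.crd_sum B.D.crd_scale)
    also have "\<dots> = A.D.crd (X i) (\<Sum>j<d. scl Q (A.C.crd (\<Psi> j) a) (\<Psi> j))"
      by (simp add: A.D.crd_sum A.D.crd_scale)
    also have "\<dots> = A.D.crd (X i) a" using A.C.decomp_E[OF P, of a] by simp
    finally show "B.D.crd (X' i) (\<phi> a) = B.D.crd (X' i) (\<Sum>j<d. scl Q' (A.C.crd (\<Psi> j) a) (\<Psi>' j))"
      using K1[OF i] by simp
  qed
  have K2: "B.C.crd (\<Psi>' j) (\<phi> a) = A.C.crd (\<Psi> j) a" if "j < d" for j a
    using phiP[of a] B.C.crd_basis_E[OF P' that] by simp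
  have bij: "bij \<phi>"
    unfolding bij_def
  proof
    show "inj \<phi>"
    proof
      fix a b assume "\<phi> a = \<phi> b"
      then show "a = b" using K1 by (intro EQ) metis
    qed
    show "surj \<phi>"
    proof -
      have "b = \<phi> (\<Sum>i<d. scl Q (B.D.crd (X' i) b) (X i))" for b
        by (rule EQ') (simp add: K1 A.D.crd_basis_E[OF X])
      then show ?thesis by (metis surj_def)
    qed
  qed
  have dot: "\<phi> (dotp Q a b) = dotp Q' (\<phi> a) (\<phi> b)" for a b
    by (rule EQ') (simp add: K1 A.D.crd_mult[OF Xi] B.D.crd_mult[OF Xi'])
  have cross: "\<phi> (crossp Q a b) = crossp Q' (\<phi> a) (\<phi> b)" for a b
    by (rule EQc) (simp add: K2 A.C.crd_mult[OF Pj] B.C.crd_mult[OF Pj'])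
  have trd: "tr_dot Q' (\<phi> a) = tr_dot Q a" for a
  proof -
    have "tr_dot Q' (\<phi> a) = (\<Sum>i<d. B.D.crd (X' i) (\<phi> a) * tr_dot Q' (X' i))" by (rule B.D.t_decomp_E[OF X'])
    also have "\<dots> = (\<Sum>i<d. A.D.crd (X i) a * tr_dot Q (X i))"
      using hA by (intro sum.cong refl) (simp add: K1 d_def A.ip_XX[OF Xi, symmetric] B.ip_XX[OF Xi', symmetric])
    also have "\<dots> = tr_dot Q a" by (rule A.D.t_decomp_E[OF X, symmetric])
    finally show ?thesis .
  qed
  have trc: "tr_cross Q' (\<phi> a) = tr_cross Q a" for a
  proof -
    have "tr_cross Q' (\<phi> a) = (\<Sum>j<d. B.C.crd (\<Psi>' j) (\<phi> a) * tr_cross Q' (\<Psi>' j))" by (rule B.C.t_decomp_E[OF P'])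
    also have "\<dots> = (\<Sum>j<d. A.C.crd (\<Psi> j) a * tr_cross Q (\<Psi> j))"
      using hB by (intro sum.cong refl) (simp add: K2 d_def A.ip_PP[OF Pj, symmetric] B.ip_PP[OF Pj', symmetric])
    also have "\<dots> = tr_cross Q a" by (rule A.C.t_decomp_E[OF P, symmetric])
    finally show ?thesis .
  qed
  have pi: "\<phi> (piQ Q a) = piQ Q' (\<phi> a)" for a
    by (rule EQ') (simp add: K1 A.D.crd_f[OF Xi] B.D.crd_f[OF Xi'])
  obtain m where m: "\<forall>i<d. m i < d \<and> m (m i) = i \<and> muQ Q (X i) = X (m i)"
    using A.perm_exists[OF X, of "muQ Q"] Xi A.mD.g_M by auto
  have m': "muQ Q' (X' i) = X' (m i)" if "i < d" for i
  proof -
    have 1: "m i < d" "muQ Q (X i) = X (m i)" using m that by auto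
    show ?thesis using hmu 1 that unfolding d_def by blast
  qed
  have cm: "A.D.crd (X k) (muQ Q a) = cnj (A.D.crd (X (m k)) a)" if "k < d" for k a
  proof -
    have "X k = muQ Q (X (m k))" using m that by metis
    then show ?thesis using A.mD.crd_g[OF Xi, of "m k" a] m that by metis
  qed
  have cm': "B.D.crd (X' k) (muQ Q' b) = cnj (B.D.crd (X' (m k)) b)" if "k < d" for k b
  proof -
    have "X' k = muQ Q' (X' (m k))" using m m' that by metis
    then show ?thesis using B.mD.crd_g[OF Xi', of "m k" b] m that by metis
  qed
  have mu: "\<phi> (muQ Q a) = muQ Q' (\<phi> a)" for a
    by (rule EQ') (simp add: K1 cm cm' m)
  show ?thesis unfolding chalg_iso_def using lin bij dot cross trd trc pi mu by blast
qed



theorem propositionP: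
  fixes Q :: "'q::ab_group_add chalg" and n :: real
  assumes "char_alg Q n"
  shows
   "(\<exists>\<phi>. cd_alg_iso Q (dotp Q) (one_dot Q) (cdim Q) \<phi>) \<and>
    (\<exists>\<phi>. cd_alg_iso Q (crossp Q) (one_cross Q) (cdim Q) \<phi>) \<and>
    finite {e. min_idem (dotp Q) e} \<and> card {e. min_idem (dotp Q) e} = cdim Q \<and>
    finite {e. min_idem (crossp Q) e} \<and> card {e. min_idem (crossp Q) e} = cdim Q \<and>
    (\<forall>X \<Psi>. bij_betw X {..<cdim Q} {e. min_idem (dotp Q) e} \<longrightarrow>
            bij_betw \<Psi> {..<cdim Q} {e. min_idem (crossp Q) e} \<longrightarrow>
       \<comment> \<open>(2)\<close>
       (\<forall>i<cdim Q. piQ Q (X i) = X i) \<and> (\<forall>j<cdim Q. muQ Q (\<Psi> j) = \<Psi> j) \<and>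
       (\<exists>m p. (\<forall>i<cdim Q. m i < cdim Q \<and> m (m i) = i \<and> muQ Q (X i) = X (m i)) \<and>
              (\<forall>j<cdim Q. p j < cdim Q \<and> p (p j) = j \<and> piQ Q (\<Psi> j) = \<Psi> (p j)) \<and>
              \<comment> \<open>(3), last line\<close>
              (\<forall>i<cdim Q. ip Q (X (m i)) (X (m i)) = ip Q (X i) (X i)) \<and>
              (\<forall>j<cdim Q. ip Q (\<Psi> (p j)) (\<Psi> (p j)) = ip Q (\<Psi> j) (\<Psi> j)) \<and>
              (\<forall>i<cdim Q. \<forall>j<cdim Q. ip Q (X i) (\<Psi> (p j)) = cnj (ip Q (X i) (\<Psi> j))) \<and>
              (\<forall>i<cdim Q. \<forall>j<cdim Q. ip Q (X (m i)) (\<Psi> j) = cnj (ip Q (X i) (\<Psi> j)))) \<and>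
       \<comment> \<open>(3)\<close>
       (\<forall>i<cdim Q. \<forall>i'<cdim Q. ip Q (X i) (X i') = (if i = i' then ip Q (X i) (X i) else 0)) \<and>
       (\<forall>j<cdim Q. \<forall>j'<cdim Q. ip Q (\<Psi> j) (\<Psi> j') = (if j = j' then ip Q (\<Psi> j) (\<Psi> j) else 0)) \<and>
       (\<forall>i<cdim Q. ip Q (X i) (X i) = tr_dot Q (X i) \<and>
                   Im (tr_dot Q (X i)) = 0 \<and> Re (tr_dot Q (X i)) > 0) \<and>
       (\<forall>j<cdim Q. ip Q (\<Psi> j) (\<Psi> j) = tr_cross Q (\<Psi> j) \<and>
                   Im (tr_cross Q (\<Psi> j)) = 0 \<and> Re (tr_cross Q (\<Psi> j)) > 0) \<and>
       (\<forall>k<cdim Q. \<forall>l<cdim Q.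
          (if k = l then ip Q (\<Psi> k) (\<Psi> k) else 0) =
          (\<Sum>i<cdim Q. inverse (ip Q (X i) (X i)) * cnj (ip Q (X i) (\<Psi> k)) * ip Q (X i) (\<Psi> l))) \<and>
       (\<forall>i<cdim Q. \<forall>j<cdim Q.
          (if i = j then ip Q (X i) (X i) else 0) =
          (\<Sum>s<cdim Q. inverse (ip Q (\<Psi> s) (\<Psi> s)) * ip Q (X i) (\<Psi> s) * cnj (ip Q (X j) (\<Psi> s)))) \<and>
       \<comment> \<open>(5)\<close>
       crossp Q (scl Q (complex_of_real (1 / n)) (one_dot Q)) (scl Q (complex_of_real (1 / n)) (one_dot Q))
         = scl Q (complex_of_real (1 / n)) (one_dot Q) \<and>
       dotp Q (one_cross Q) (one_cross Q) = one_cross Q \<and>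
       (\<exists>nn mm. (\<forall>j<cdim Q. nn j \<in> {0, 1}) \<and> (\<forall>i<cdim Q. mm i \<in> {0, 1}) \<and>
          scl Q (complex_of_real (1 / n)) (one_dot Q) = (\<Sum>j<cdim Q. scl Q (nn j) (\<Psi> j)) \<and>
          one_cross Q = (\<Sum>i<cdim Q. scl Q (mm i) (X i)) \<and>
          (\<forall>i<cdim Q. ip Q (X i) (X i) = complex_of_real n * (\<Sum>j<cdim Q. ip Q (X i) (\<Psi> j) * nn j)) \<and>
          (\<forall>j<cdim Q. ip Q (\<Psi> j) (\<Psi> j) = (\<Sum>i<cdim Q. ip Q (X i) (\<Psi> j) * mm i))) \<and>
       ((scl Q (complex_of_real (1 / n)) (one_dot Q) = \<Psi> 0 \<and> one_cross Q = X 0) \<longrightarrow>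
          (\<forall>i<cdim Q. ip Q (X i) (X i) = complex_of_real n * ip Q (X i) (\<Psi> 0)) \<and>
          (\<forall>j<cdim Q. ip Q (\<Psi> j) (\<Psi> j) = ip Q (X 0) (\<Psi> j))) \<and>
       \<comment> \<open>(4)\<close>
       (\<forall>(Q' :: 'r::ab_group_add chalg) n' X' \<Psi>'. char_alg Q' n' \<longrightarrow>
          bij_betw X' {..<cdim Q} {e. min_idem (dotp Q') e} \<longrightarrow>
          bij_betw \<Psi>' {..<cdim Q} {e. min_idem (crossp Q') e} \<longrightarrow>
          (\<forall>i<cdim Q. ip Q' (X' i) (X' i) = ip Q (X i) (X i)) \<longrightarrow>
          (\<forall>j<cdim Q. ip Q' (\<Psi>' j) (\<Psi>' j) = ip Q (\<Psi> j) (\<Psi> j)) \<longrightarrow>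
          (\<forall>i<cdim Q. \<forall>j<cdim Q. ip Q' (X' i) (\<Psi>' j) = ip Q (X i) (\<Psi> j)) \<longrightarrow>
          (\<forall>i<cdim Q. \<forall>k<cdim Q. muQ Q (X i) = X k \<longleftrightarrow> muQ Q' (X' i) = X' k) \<longrightarrow>
          (\<forall>j<cdim Q. \<forall>k<cdim Q. piQ Q (\<Psi> j) = \<Psi> k \<longleftrightarrow> piQ Q' (\<Psi>' j) = \<Psi>' k) \<longrightarrow>
          (\<exists>\<phi>. chalg_iso Q Q' \<phi>)))"
proof -
  interpret calg Q n by (rule calg.intro[OF assms])
  have DM: "{e. min_idem (dotp Q) e} = D.M" by (simp add: D.M_def)
  have CM: "{e. min_idem (crossp Q) e} = C.M" by (simp add: C.M_def)
  have dd: "cdim Q = D.dim UNIV" by (rule cdim_eq)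
  obtain E1 where E1: "bij_betw E1 {..<D.dim UNIV} D.M" using D.exists_enum by blast
  obtain E2 where E2: "bij_betw E2 {..<D.dim UNIV} C.M" using C.exists_enum by blast
  have i1: "\<exists>\<phi>. cd_alg_iso Q (dotp Q) (one_dot Q) (cdim Q) \<phi>"
    using D.cd_iso[OF E1] unfolding cd_alg_iso_def dd by blast
  have i2: "\<exists>\<phi>. cd_alg_iso Q (crossp Q) (one_cross Q) (cdim Q) \<phi>"
    using C.cd_iso[OF E2] unfolding cd_alg_iso_def dd by blast
  have fc: "finite {e. min_idem (dotp Q) e} \<and> card {e. min_idem (dotp Q) e} = cdim Q \<and>
    finite {e. min_idem (crossp Q) e} \<and> card {e. min_idem (crossp Q) e} = cdim Q"
    unfolding DM CM dd using D.M_fin D.M_card C.M_fin C.M_card by simp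
  have main: "(\<forall>X \<Psi>. bij_betw X {..<cdim Q} {e. min_idem (dotp Q) e} \<longrightarrow>
            bij_betw \<Psi> {..<cdim Q} {e. min_idem (crossp Q) e} \<longrightarrow>
       \<comment> \<open>(2)\<close>
       (\<forall>i<cdim Q. piQ Q (X i) = X i) \<and> (\<forall>j<cdim Q. muQ Q (\<Psi> j) = \<Psi> j) \<and>
       (\<exists>m p. (\<forall>i<cdim Q. m i < cdim Q \<and> m (m i) = i \<and> muQ Q (X i) = X (m i)) \<and>
              (\<forall>j<cdim Q. p j < cdim Q \<and> p (p j) = j \<and> piQ Q (\<Psi> j) = \<Psi> (p j)) \<and>
              \<comment> \<open>(3), last line\<close>
              (\<forall>i<cdim Q. ip Q (X (m i)) (X (m i)) = ip Q (X i) (X i)) \<and>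
              (\<forall>j<cdim Q. ip Q (\<Psi> (p j)) (\<Psi> (p j)) = ip Q (\<Psi> j) (\<Psi> j)) \<and>
              (\<forall>i<cdim Q. \<forall>j<cdim Q. ip Q (X i) (\<Psi> (p j)) = cnj (ip Q (X i) (\<Psi> j))) \<and>
              (\<forall>i<cdim Q. \<forall>j<cdim Q. ip Q (X (m i)) (\<Psi> j) = cnj (ip Q (X i) (\<Psi> j)))) \<and>
       \<comment> \<open>(3)\<close>
       (\<forall>i<cdim Q. \<forall>i'<cdim Q. ip Q (X i) (X i') = (if i = i' then ip Q (X i) (X i) else 0)) \<and>
       (\<forall>j<cdim Q. \<forall>j'<cdim Q. ip Q (\<Psi> j) (\<Psi> j') = (if j = j' then ip Q (\<Psi> j) (\<Psi> j) else 0)) \<and>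
       (\<forall>i<cdim Q. ip Q (X i) (X i) = tr_dot Q (X i) \<and>
                   Im (tr_dot Q (X i)) = 0 \<and> Re (tr_dot Q (X i)) > 0) \<and>
       (\<forall>j<cdim Q. ip Q (\<Psi> j) (\<Psi> j) = tr_cross Q (\<Psi> j) \<and>
                   Im (tr_cross Q (\<Psi> j)) = 0 \<and> Re (tr_cross Q (\<Psi> j)) > 0) \<and>
       (\<forall>k<cdim Q. \<forall>l<cdim Q.
          (if k = l then ip Q (\<Psi> k) (\<Psi> k) else 0) =
          (\<Sum>i<cdim Q. inverse (ip Q (X i) (X i)) * cnj (ip Q (X i) (\<Psi> k)) * ip Q (X i) (\<Psi> l))) \<and>
       (\<forall>i<cdim Q. \<forall>j<cdim Q.
          (if i = j then ip Q (X i) (X i) else 0) =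
          (\<Sum>s<cdim Q. inverse (ip Q (\<Psi> s) (\<Psi> s)) * ip Q (X i) (\<Psi> s) * cnj (ip Q (X j) (\<Psi> s)))) \<and>
       \<comment> \<open>(5)\<close>
       crossp Q (scl Q (complex_of_real (1 / n)) (one_dot Q)) (scl Q (complex_of_real (1 / n)) (one_dot Q))
         = scl Q (complex_of_real (1 / n)) (one_dot Q) \<and>
       dotp Q (one_cross Q) (one_cross Q) = one_cross Q \<and>
       (\<exists>nn mm. (\<forall>j<cdim Q. nn j \<in> {0, 1}) \<and> (\<forall>i<cdim Q. mm i \<in> {0, 1}) \<and>
          scl Q (complex_of_real (1 / n)) (one_dot Q) = (\<Sum>j<cdim Q. scl Q (nn j) (\<Psi> j)) \<and>
          one_cross Q = (\<Sum>i<cdim Q. scl Q (mm i) (X i)) \<and>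
          (\<forall>i<cdim Q. ip Q (X i) (X i) = complex_of_real n * (\<Sum>j<cdim Q. ip Q (X i) (\<Psi> j) * nn j)) \<and>
          (\<forall>j<cdim Q. ip Q (\<Psi> j) (\<Psi> j) = (\<Sum>i<cdim Q. ip Q (X i) (\<Psi> j) * mm i))) \<and>
       ((scl Q (complex_of_real (1 / n)) (one_dot Q) = \<Psi> 0 \<and> one_cross Q = X 0) \<longrightarrow>
          (\<forall>i<cdim Q. ip Q (X i) (X i) = complex_of_real n * ip Q (X i) (\<Psi> 0)) \<and>
          (\<forall>j<cdim Q. ip Q (\<Psi> j) (\<Psi> j) = ip Q (X 0) (\<Psi> j))) \<and>
       \<comment> \<open>(4)\<close>
       (\<forall>(Q' :: 'r::ab_group_add chalg) n' X' \<Psi>'. char_alg Q' n' \<longrightarrow>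
          bij_betw X' {..<cdim Q} {e. min_idem (dotp Q') e} \<longrightarrow>
          bij_betw \<Psi>' {..<cdim Q} {e. min_idem (crossp Q') e} \<longrightarrow>
          (\<forall>i<cdim Q. ip Q' (X' i) (X' i) = ip Q (X i) (X i)) \<longrightarrow>
          (\<forall>j<cdim Q. ip Q' (\<Psi>' j) (\<Psi>' j) = ip Q (\<Psi> j) (\<Psi> j)) \<longrightarrow>
          (\<forall>i<cdim Q. \<forall>j<cdim Q. ip Q' (X' i) (\<Psi>' j) = ip Q (X i) (\<Psi> j)) \<longrightarrow>
          (\<forall>i<cdim Q. \<forall>k<cdim Q. muQ Q (X i) = X k \<longleftrightarrow> muQ Q' (X' i) = X' k) \<longrightarrow>
          (\<forall>j<cdim Q. \<forall>k<cdim Q. piQ Q (\<Psi> j) = \<Psi> k \<longleftrightarrow> piQ Q' (\<Psi>' j) = \<Psi>' k) \<longrightarrow>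
          (\<exists>\<phi>. chalg_iso Q Q' \<phi>)))"
  proof (intro allI impI)
    fix X \<Psi>
    assume X: "bij_betw X {..<cdim Q} {e. min_idem (dotp Q) e}"
      and P: "bij_betw \<Psi> {..<cdim Q} {e. min_idem (crossp Q) e}"
    have X1: "bij_betw X {..<cdim Q} D.M" and P1: "bij_betw \<Psi> {..<cdim Q} C.M" using X P DM CM by simp_all
    note p2 = part2[OF X1 P1] and p3 = part3[OF X1 P1] and p5 = part5[OF X1 P1]
    have p4: "\<forall>(Q' :: 'r::ab_group_add chalg) n' X' \<Psi>'. char_alg Q' n' \<longrightarrow>
          bij_betw X' {..<cdim Q} {e. min_idem (dotp Q') e} \<longrightarrow>
          bij_betw \<Psi>' {..<cdim Q} {e. min_idem (crossp Q') e} \<longrightarrow>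
          (\<forall>i<cdim Q. ip Q' (X' i) (X' i) = ip Q (X i) (X i)) \<longrightarrow>
          (\<forall>j<cdim Q. ip Q' (\<Psi>' j) (\<Psi>' j) = ip Q (\<Psi> j) (\<Psi> j)) \<longrightarrow>
          (\<forall>i<cdim Q. \<forall>j<cdim Q. ip Q' (X' i) (\<Psi>' j) = ip Q (X i) (\<Psi> j)) \<longrightarrow>
          (\<forall>i<cdim Q. \<forall>k<cdim Q. muQ Q (X i) = X k \<longleftrightarrow> muQ Q' (X' i) = X' k) \<longrightarrow>
          (\<forall>j<cdim Q. \<forall>k<cdim Q. piQ Q (\<Psi> j) = \<Psi> k \<longleftrightarrow> piQ Q' (\<Psi>' j) = \<Psi>' k) \<longrightarrow>
          (\<exists>\<phi>. chalg_iso Q Q' \<phi>)"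
      using part4[OF assms _ X P] by blast
    show "(\<forall>i<cdim Q. piQ Q (X i) = X i) \<and> (\<forall>j<cdim Q. muQ Q (\<Psi> j) = \<Psi> j) \<and>
       (\<exists>m p. (\<forall>i<cdim Q. m i < cdim Q \<and> m (m i) = i \<and> muQ Q (X i) = X (m i)) \<and>
              (\<forall>j<cdim Q. p j < cdim Q \<and> p (p j) = j \<and> piQ Q (\<Psi> j) = \<Psi> (p j)) \<and>
              (\<forall>i<cdim Q. ip Q (X (m i)) (X (m i)) = ip Q (X i) (X i)) \<and>
              (\<forall>j<cdim Q. ip Q (\<Psi> (p j)) (\<Psi> (p j)) = ip Q (\<Psi> j) (\<Psi> j)) \<and>
              (\<forall>i<cdim Q. \<forall>j<cdim Q. ip Q (X i) (\<Psi> (p j)) = cnj (ip Q (X i) (\<Psi> j))) \<and>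
              (\<forall>i<cdim Q. \<forall>j<cdim Q. ip Q (X (m i)) (\<Psi> j) = cnj (ip Q (X i) (\<Psi> j)))) \<and>
       (\<forall>i<cdim Q. \<forall>i'<cdim Q. ip Q (X i) (X i') = (if i = i' then ip Q (X i) (X i) else 0)) \<and>
       (\<forall>j<cdim Q. \<forall>j'<cdim Q. ip Q (\<Psi> j) (\<Psi> j') = (if j = j' then ip Q (\<Psi> j) (\<Psi> j) else 0)) \<and>
       (\<forall>i<cdim Q. ip Q (X i) (X i) = tr_dot Q (X i) \<and>
                   Im (tr_dot Q (X i)) = 0 \<and> Re (tr_dot Q (X i)) > 0) \<and>
       (\<forall>j<cdim Q. ip Q (\<Psi> j) (\<Psi> j) = tr_cross Q (\<Psi> j) \<and>
                   Im (tr_cross Q (\<Psi> j)) = 0 \<and> Re (tr_cross Q (\<Psi> j)) > 0) \<and>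
       (\<forall>k<cdim Q. \<forall>l<cdim Q.
          (if k = l then ip Q (\<Psi> k) (\<Psi> k) else 0) =
          (\<Sum>i<cdim Q. inverse (ip Q (X i) (X i)) * cnj (ip Q (X i) (\<Psi> k)) * ip Q (X i) (\<Psi> l))) \<and>
       (\<forall>i<cdim Q. \<forall>j<cdim Q.
          (if i = j then ip Q (X i) (X i) else 0) =
          (\<Sum>s<cdim Q. inverse (ip Q (\<Psi> s) (\<Psi> s)) * ip Q (X i) (\<Psi> s) * cnj (ip Q (X j) (\<Psi> s)))) \<and>
       crossp Q (scl Q (complex_of_real (1 / n)) (one_dot Q)) (scl Q (complex_of_real (1 / n)) (one_dot Q))
         = scl Q (complex_of_real (1 / n)) (one_dot Q) \<and>
       dotp Q (one_cross Q) (one_cross Q) = one_cross Q \<and>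
       (\<exists>nn mm. (\<forall>j<cdim Q. nn j \<in> {0, 1}) \<and> (\<forall>i<cdim Q. mm i \<in> {0, 1}) \<and>
          scl Q (complex_of_real (1 / n)) (one_dot Q) = (\<Sum>j<cdim Q. scl Q (nn j) (\<Psi> j)) \<and>
          one_cross Q = (\<Sum>i<cdim Q. scl Q (mm i) (X i)) \<and>
          (\<forall>i<cdim Q. ip Q (X i) (X i) = complex_of_real n * (\<Sum>j<cdim Q. ip Q (X i) (\<Psi> j) * nn j)) \<and>
          (\<forall>j<cdim Q. ip Q (\<Psi> j) (\<Psi> j) = (\<Sum>i<cdim Q. ip Q (X i) (\<Psi> j) * mm i))) \<and>
       ((scl Q (complex_of_real (1 / n)) (one_dot Q) = \<Psi> 0 \<and> one_cross Q = X 0) \<longrightarrow>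
          (\<forall>i<cdim Q. ip Q (X i) (X i) = complex_of_real n * ip Q (X i) (\<Psi> 0)) \<and>
          (\<forall>j<cdim Q. ip Q (\<Psi> j) (\<Psi> j) = ip Q (X 0) (\<Psi> j))) \<and>
       (\<forall>(Q' :: 'r::ab_group_add chalg) n' X' \<Psi>'. char_alg Q' n' \<longrightarrow>
          bij_betw X' {..<cdim Q} {e. min_idem (dotp Q') e} \<longrightarrow>
          bij_betw \<Psi>' {..<cdim Q} {e. min_idem (crossp Q') e} \<longrightarrow>
          (\<forall>i<cdim Q. ip Q' (X' i) (X' i) = ip Q (X i) (X i)) \<longrightarrow>
          (\<forall>j<cdim Q. ip Q' (\<Psi>' j) (\<Psi>' j) = ip Q (\<Psi> j) (\<Psi> j)) \<longrightarrow>
          (\<forall>i<cdim Q. \<forall>j<cdim Q. ip Q' (X' i) (\<Psi>' j) = ip Q (X i) (\<Psi> j)) \<longrightarrow>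
          (\<forall>i<cdim Q. \<forall>k<cdim Q. muQ Q (X i) = X k \<longleftrightarrow> muQ Q' (X' i) = X' k) \<longrightarrow>
          (\<forall>j<cdim Q. \<forall>k<cdim Q. piQ Q (\<Psi> j) = \<Psi> k \<longleftrightarrow> piQ Q' (\<Psi>' j) = \<Psi>' k) \<longrightarrow>
          (\<exists>\<phi>. chalg_iso Q Q' \<phi>))"
      using conjI[OF p2 conjI[OF p3 conjI[OF p5 p4]]] unfolding conj_assoc by assumption
  qed
  show ?thesis using conjI[OF i1 conjI[OF i2 conjI[OF fc main]]] unfolding conj_assoc by assumption
qed


end
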